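(* In the setting of the context, there exist universal positive constants $L_1,U_1,L_2,U_2,\bar L_1,\bar U_1,\bar L_2,\bar U_2$ such that for sufficiently large $n$, with probability at least $1-8e^{-\sqrt n}$ over the training data, $$\mathsf{SU}_r^L(n)\le\mathsf{SU}_r(1;n)\le\mathsf{SU}_r^U(n)\quad\text{and}\quad \bar{\mathsf{SU}}_r^L(n)\le 1-\mathsf{SU}_r(1;n)\le\bar{\mathsf{SU}}_r^U(n),$$ where $$\mathsf{SU}_r^L(n)=\begin{cases}(1+L_1n^{q-(1-r)})^{-1},&q<1-r\\ L_2n^{(1-r)-q},&q>1-r\end{cases},\quad \mathsf{SU}_r^U(n)=\begin{cases}(1+U_1n^{q-(1-r)})^{-1},&q<1-r\\ U_2n^{(1-r)-q},&q>1-r\end{cases},$$ $$\bar{\mathsf{SU}}_r^L(n)=\begin{cases}\bar L_1n^{q-(1-r)},&q<1-r\\ (1+\bar L_2n^{(1-r)-q})^{-1},&q>1-r\end{cases},\quad \bar{\mathsf{SU}}_r^U(n)=\begin{cases}\bar U_1n^{q-(1-r)},&q<1-r\\ (1+\bar U_2n^{(1-r)-q})^{-1},&q>1-r\end{cases}.$$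
   Context: Bi-level ensemble with fixed parameters $p>1$, $0\le r<1$, $0<q<p-r$: $d=n^p$, $s=n^r$, $a=n^{-q}$, $\boldsymbol\Sigma=\mathrm{diag}(\lambda_1,\dots,\lambda_d)$ with $\lambda_j=\frac{ad}{s}$ for $j\le s$ and $\frac{(1-a)d}{d-s}$ for $j>s$. Training features $\boldsymbol\phi(X_i)\sim\mathcal N(\mathbf0,\boldsymbol\Sigma)$ i.i.d., $i\le n$, rows of $\boldsymbol\Phi_{\mathsf{train}}$. Target $\boldsymbol\alpha^*=\mathbf e_1/\sqrt{\lambda_1}$, real outputs $Z_i=\langle\boldsymbol\phi(X_i),\boldsymbol\alpha^*\rangle$. $\widehat{\boldsymbol\alpha}_{2,\mathsf{real}}$ is the minimum-$\ell_2$-norm solution of $\boldsymbol\Phi_{\mathsf{train}}\boldsymbol\alpha=\mathbf Z_{\mathsf{train}}$, and $\mathsf{SU}_r(1;n)=\sqrt{\lambda_1}(\widehat{\boldsymbol\alpha}_{2,\mathsf{real}})_1$. *)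

theory Defs
  imports "HOL-Probability.Probability"
begin

text \<open>Bi-level ensemble. Dimensions d = n^p, s = n^r are rounded down to integers.
Coordinates are 0-indexed: coordinate j (0-based) corresponds to paper index j+1.\<close>

definition bl_d :: "nat \<Rightarrow> real \<Rightarrow> nat" where
  "bl_d n p = nat \<lfloor>real n powr p\<rfloor>"

definition bl_s :: "nat \<Rightarrow> real \<Rightarrow> nat" where
  "bl_s n r = nat \<lfloor>real n powr r\<rfloor>"

definition bl_a :: "nat \<Rightarrow> real \<Rightarrow> real" where
  "bl_a n q = real n powr (- q)"

definition bl_lambda :: "nat \<Rightarrow> real \<Rightarrow> real \<Rightarrow> real \<Rightarrow> nat \<Rightarrow> real" where
  "bl_lambda n p q r j =
     (let d = real (bl_d n p); s = real (bl_s n r); a = bl_a n q in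
      if j < bl_s n r then a * d / s else (1 - a) * d / (d - s))"

text \<open>Law of the training feature matrix Phi (n x d): rows i.i.d. N(0, Sigma) with
Sigma diagonal, i.e. all entries independent, entry (i,j) ~ N(0, lambda_j).\<close>
definition bl_train_measure :: "nat \<Rightarrow> real \<Rightarrow> real \<Rightarrow> real \<Rightarrow> ((nat \<times> nat) \<Rightarrow> real) measure" where
  "bl_train_measure n p q r =
     PiM ({..<n} \<times> {..<bl_d n p})
         (\<lambda>(i, j). density lborel (normal_density 0 (sqrt (bl_lambda n p q r j))))"

definition min_norm_sol :: "nat \<Rightarrow> nat \<Rightarrow> (nat \<Rightarrow> nat \<Rightarrow> real) \<Rightarrow> (nat \<Rightarrow> real) \<Rightarrow> (nat \<Rightarrow> real)" where
  "min_norm_sol n d Phi Z =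
     (THE alpha. (\<forall>j\<ge>d. alpha j = 0) \<and>
        (\<forall>i<n. (\<Sum>j<d. Phi i j * alpha j) = Z i) \<and>
        (\<forall>beta. (\<forall>i<n. (\<Sum>j<d. Phi i j * beta j) = Z i) \<longrightarrow>
                 (\<Sum>j<d. (alpha j)\<^sup>2) \<le> (\<Sum>j<d. (beta j)\<^sup>2)))"

definition SU1 :: "nat \<Rightarrow> real \<Rightarrow> real \<Rightarrow> real \<Rightarrow> ((nat \<times> nat) \<Rightarrow> real) \<Rightarrow> real" where
  "SU1 n p q r omega =
     (let d = bl_d n p; lam1 = bl_lambda n p q r 0;
          Phi = (\<lambda>i j. omega (i, j));
          alpha_star = (\<lambda>j. if j = 0 then 1 / sqrt lam1 else 0);
          Z = (\<lambda>i. \<Sum>j<d. Phi i j * alpha_star j)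
      in sqrt lam1 * min_norm_sol n d Phi Z 0)"

end

theory Submission
  imports Defs "HOL-Real_Asymp.Real_Asymp"
begin

definition dotn :: "nat \<Rightarrow> (nat \<Rightarrow> real) \<Rightarrow> (nat \<Rightarrow> real) \<Rightarrow> real" where
  "dotn N u v = (\<Sum>l<N. u l * v l)"

lemma proj_exists:
  fixes c :: "nat \<Rightarrow> nat \<Rightarrow> real"
  shows "\<exists>w. \<forall>j<k. dotn N (\<lambda>l. b l - (\<Sum>m<k. w m * c m l)) (c j) = 0"
proof (induction k arbitrary: b)
  case 0
  then show ?case by simp
next
  case (Suc k)
  obtain wb where wb: "\<forall>j<k. dotn N (\<lambda>l. b l - (\<Sum>m<k. wb m * c m l)) (c j) = 0"
    using Suc.IH by blast
  obtain wc where wc: "\<forall>j<k. dotn N (\<lambda>l. c k l - (\<Sum>m<k. wc m * c m l)) (c j) = 0"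
    using Suc.IH by blast
  define r where "r = (\<lambda>l. b l - (\<Sum>m<k. wb m * c m l))"
  define r' where "r' = (\<lambda>l. c k l - (\<Sum>m<k. wc m * c m l))"
  define t where "t = (if dotn N r' r' = 0 then 0 else dotn N r r' / dotn N r' r')"
  define w' where "w' = (\<lambda>m. if m < k then wb m - t * wc m else t)"
  have res: "(\<lambda>l. b l - (\<Sum>m<Suc k. w' m * c m l)) = (\<lambda>l. r l - t * r' l)"
  proof
    fix l
    have "(\<Sum>m<Suc k. w' m * c m l) = (\<Sum>m<k. (wb m - t * wc m) * c m l) + t * c k l"
      by (simp add: w'_def)
    also have "\<dots> = (\<Sum>m<k. wb m * c m l) - t * (\<Sum>m<k. wc m * c m l) + t * c k l"
      by (simp add: algebra_simps sum_subtractf sum_distrib_left)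
    finally show "b l - (\<Sum>m<Suc k. w' m * c m l) = r l - t * r' l"
      by (simp add: r_def r'_def algebra_simps)
  qed
  have dlin: "dotn N (\<lambda>l. f l - t * g l) h = dotn N f h - t * dotn N g h" for f g h
    by (simp add: dotn_def algebra_simps sum_subtractf sum_distrib_left)
  have orth_r: "dotn N r (c j) = 0" if "j < k" for j using wb that by (simp add: r_def)
  have orth_r': "dotn N r' (c j) = 0" if "j < k" for j using wc that by (simp add: r'_def)
  have ck: "c k = (\<lambda>l. r' l + (\<Sum>m<k. wc m * c m l))" by (simp add: r'_def)
  have span0: "dotn N f (\<lambda>l. (\<Sum>m<k. wc m * c m l)) = (\<Sum>m<k. wc m * dotn N f (c m))" for f
    by (simp add: dotn_def sum_distrib_left sum_distrib_right algebra_simps; subst sum.swap; simp add: algebra_simps)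
  have addr: "dotn N f (\<lambda>l. g l + h l) = dotn N f g + dotn N f h" for f g h
    by (simp add: dotn_def algebra_simps sum.distrib)
  have "\<forall>j<Suc k. dotn N (\<lambda>l. r l - t * r' l) (c j) = 0"
  proof (intro allI impI)
    fix j assume j: "j < Suc k"
    show "dotn N (\<lambda>l. r l - t * r' l) (c j) = 0"
    proof (cases "j < k")
      case True
      then show ?thesis using dlin orth_r orth_r' by simp
    next
      case False
      then have jk: "j = k" using j by simp
      have sp: "dotn N (\<lambda>l. r l - t * r' l) (\<lambda>l. (\<Sum>m<k. wc m * c m l)) = 0"
        unfolding span0 using dlin orth_r orth_r' by simp
      have "dotn N (\<lambda>l. r l - t * r' l) r' = 0"
      proof (cases "dotn N r' r' = 0")
        case True
        have "\<forall>l\<in>{..<N}. r' l * r' l = 0"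
          using True by (subst sum_nonneg_eq_0_iff[symmetric]) (auto simp: dotn_def)
        then have "dotn N r r' = 0" by (auto simp: dotn_def)
        then show ?thesis using True by (simp add: dlin t_def)
      next
        case False
        have "dotn N (\<lambda>l. r l - t * r' l) r' = dotn N r r' - t * dotn N r' r'" by (rule dlin)
        then show ?thesis using False by (simp add: t_def)
      qed
      then have "dotn N (\<lambda>l. r l - t * r' l) (\<lambda>l. r' l + (\<Sum>m<k. wc m * c m l)) = 0"
        using sp by (simp add: addr)
      then show ?thesis using jk ck by simp
    qed
  qed
  then show ?case using res by metis
qed

lemma min_norm_sol_eq:
  fixes Phi :: "nat \<Rightarrow> nat \<Rightarrow> real"
  assumes u: "\<forall>i<n. (\<Sum>j<d. Phi i j * (\<Sum>m<n. u m * Phi m j)) = Z i"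
  shows "min_norm_sol n d Phi Z = (\<lambda>j. if j < d then \<Sum>m<n. u m * Phi m j else 0)"
proof -
  define al where "al = (\<lambda>j. if j < d then \<Sum>m<n. u m * Phi m j else 0)"
  have feas: "\<forall>i<n. (\<Sum>j<d. Phi i j * al j) = Z i"
    using u by (simp add: al_def)
  have orth: "(\<Sum>j<d. al j * (be j - al j)) = 0" if be: "\<forall>i<n. (\<Sum>j<d. Phi i j * be j) = Z i" for be
  proof -
    have "(\<Sum>j<d. al j * (be j - al j)) = (\<Sum>j<d. (\<Sum>m<n. u m * Phi m j) * (be j - al j))"
      by (simp add: al_def)
    also have "\<dots> = (\<Sum>m<n. u m * (\<Sum>j<d. Phi m j * (be j - al j)))"
      by (simp add: sum_distrib_left sum_distrib_right algebra_simps; subst sum.swap; simp)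
    also have "\<dots> = (\<Sum>m<n. u m * ((\<Sum>j<d. Phi m j * be j) - (\<Sum>j<d. Phi m j * al j)))"
      by (simp add: algebra_simps sum_subtractf)
    also have "\<dots> = 0" using be feas by simp
    finally show ?thesis .
  qed
  have pyth: "(\<Sum>j<d. (be j)\<^sup>2) = (\<Sum>j<d. (al j)\<^sup>2) + (\<Sum>j<d. (be j - al j)\<^sup>2)"
    if be: "\<forall>i<n. (\<Sum>j<d. Phi i j * be j) = Z i" for be
  proof -
    have "(\<Sum>j<d. (be j)\<^sup>2) = (\<Sum>j<d. (al j)\<^sup>2 + 2 * (al j * (be j - al j)) + (be j - al j)\<^sup>2)"
      by (rule sum.cong) (auto simp: power2_eq_square algebra_simps)
    also have "\<dots> = (\<Sum>j<d. (al j)\<^sup>2) + 2 * (\<Sum>j<d. al j * (be j - al j)) + (\<Sum>j<d. (be j - al j)\<^sup>2)"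
      by (simp add: sum.distrib sum_distrib_left)
    finally show ?thesis using orth[OF be] by simp
  qed
  show ?thesis
    unfolding min_norm_sol_def al_def[symmetric]
  proof (rule the_equality)
    show "(\<forall>j\<ge>d. al j = 0) \<and> (\<forall>i<n. (\<Sum>j<d. Phi i j * al j) = Z i) \<and>
      (\<forall>beta. (\<forall>i<n. (\<Sum>j<d. Phi i j * beta j) = Z i) \<longrightarrow> (\<Sum>j<d. (al j)\<^sup>2) \<le> (\<Sum>j<d. (beta j)\<^sup>2))"
    proof (intro conjI allI impI)
      fix beta assume "\<forall>i<n. (\<Sum>j<d. Phi i j * beta j) = Z i"
      from pyth[OF this] show "(\<Sum>j<d. (al j)\<^sup>2) \<le> (\<Sum>j<d. (beta j)\<^sup>2)"
        by (simp add: sum_nonneg)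
    qed (use feas in \<open>auto simp: al_def\<close>)
  next
    fix a assume a: "(\<forall>j\<ge>d. a j = 0) \<and> (\<forall>i<n. (\<Sum>j<d. Phi i j * a j) = Z i) \<and>
      (\<forall>beta. (\<forall>i<n. (\<Sum>j<d. Phi i j * beta j) = Z i) \<longrightarrow> (\<Sum>j<d. (a j)\<^sup>2) \<le> (\<Sum>j<d. (beta j)\<^sup>2))"
    then have "(\<Sum>j<d. (a j)\<^sup>2) \<le> (\<Sum>j<d. (al j)\<^sup>2)" using feas by blast
    moreover have "(\<Sum>j<d. (a j)\<^sup>2) = (\<Sum>j<d. (al j)\<^sup>2) + (\<Sum>j<d. (a j - al j)\<^sup>2)"
      using pyth a by blast
    ultimately have "(\<Sum>j<d. (a j - al j)\<^sup>2) = 0"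
      by (smt (verit) sum_nonneg zero_le_power2)
    then have "\<forall>j\<in>{..<d}. (a j - al j)\<^sup>2 = 0"
      by (subst sum_nonneg_eq_0_iff[symmetric]) auto
    then show "a = al" using a by (auto simp: al_def fun_eq_iff not_less)
  qed
qed

lemma gram_solvable:
  fixes Phi :: "nat \<Rightarrow> nat \<Rightarrow> real"
  shows "\<exists>u. \<forall>i<n. (\<Sum>j<d. Phi i j * (\<Sum>m<n. u m * Phi m j)) = (\<Sum>j<d. Phi i j * g j)"
proof -
  obtain w where w: "\<forall>i<n. dotn d (\<lambda>l. g l - (\<Sum>m<n. w m * Phi m l)) (Phi i) = 0"
    using proj_exists[where b=g and k=n and c=Phi and N=d] by blast
  show ?thesis
  proof (intro exI allI impI)
    fix i assume i: "i < n"
    have "0 = (\<Sum>l<d. (g l - (\<Sum>m<n. w m * Phi m l)) * Phi i l)" using w i by (simp add: dotn_def)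
    also have "\<dots> = (\<Sum>l<d. Phi i l * g l) - (\<Sum>l<d. Phi i l * (\<Sum>m<n. w m * Phi m l))"
      by (simp add: algebra_simps sum_subtractf)
    finally show "(\<Sum>j<d. Phi i j * (\<Sum>m<n. w m * Phi m j)) = (\<Sum>j<d. Phi i j * g j)" by simp
  qed
qed

lemma SU1_repr:
  assumes d: "0 < bl_d n p" and lam: "0 < bl_lambda n p q r 0"
    and u: "\<forall>i<n. (\<Sum>j<bl_d n p. omega (i, j) * (\<Sum>m<n. u m * omega (m, j))) = omega (i, 0)"
  shows "SU1 n p q r omega = (\<Sum>m<n. u m * omega (m, 0))"
proof -
  define lam1 where "lam1 = bl_lambda n p q r 0"
  define d' where "d' = bl_d n p"
  define Z where "Z = (\<lambda>i. \<Sum>j<d'. omega (i, j) * (if j = 0 then 1 / sqrt lam1 else 0))"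
  have Z: "Z i = omega (i, 0) / sqrt lam1" for i
    using d by (simp add: Z_def d'_def if_distrib cong: if_cong)
  define v where "v = (\<lambda>m. u m / sqrt lam1)"
  have v: "\<forall>i<n. (\<Sum>j<d'. omega (i, j) * (\<Sum>m<n. v m * omega (m, j))) = Z i"
  proof (intro allI impI)
    fix i assume i: "i < n"
    have "(\<Sum>j<d'. omega (i, j) * (\<Sum>m<n. v m * omega (m, j)))
        = (\<Sum>j<d'. omega (i, j) * (\<Sum>m<n. u m * omega (m, j))) / sqrt lam1"
      by (simp add: v_def sum_divide_distrib sum_distrib_left)
    also have "\<dots> = Z i" using u i Z by (simp add: d'_def)
    finally show "(\<Sum>j<d'. omega (i, j) * (\<Sum>m<n. v m * omega (m, j))) = Z i" .
  qed
  have mn: "min_norm_sol n d' (\<lambda>i j. omega (i, j)) Z = (\<lambda>j. if j < d' then \<Sum>m<n. v m * omega (m, j) else 0)"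
    by (rule min_norm_sol_eq) (use v in simp)
  have "SU1 n p q r omega = sqrt lam1 * min_norm_sol n d' (\<lambda>i j. omega (i, j)) Z 0"
    unfolding SU1_def Let_def lam1_def d'_def Z_def by simp
  also have "min_norm_sol n d' (\<lambda>i j. omega (i, j)) Z 0 = (\<Sum>m<n. v m * omega (m, 0))"
    unfolding mn using d by (simp add: d'_def)
  also have "sqrt lam1 * (\<Sum>m<n. v m * omega (m, 0)) = (\<Sum>m<n. u m * omega (m, 0))"
    using lam by (simp add: v_def sum_distrib_left lam1_def)
  finally show ?thesis .
qed

lemma SU1_exists_u:
  fixes omega :: "nat \<times> nat \<Rightarrow> real"
  assumes d: "0 < bl_d n p"
  shows "\<exists>u. \<forall>i<n. (\<Sum>j<bl_d n p. omega (i, j) * (\<Sum>m<n. u m * omega (m, j))) = omega (i, 0)"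
proof -
  obtain u where u: "\<forall>i<n. (\<Sum>j<bl_d n p. omega (i, j) * (\<Sum>m<n. u m * omega (m, j)))
       = (\<Sum>j<bl_d n p. omega (i, j) * (if j = 0 then 1 else 0))"
    using gram_solvable[where Phi="\<lambda>i j. omega (i, j)" and n=n and d="bl_d n p" and g="\<lambda>j. if j = 0 then 1 else 0"]
    by blast
  show ?thesis using u d by (intro exI[of _ u]) (simp add: if_distrib cong: if_cong)
qed

lemma quad_identity:
  fixes Phi :: "nat \<Rightarrow> nat \<Rightarrow> real"
  assumes u: "\<forall>i<n. (\<Sum>j<d. Phi i j * (\<Sum>m<n. u m * Phi m j)) = x i"
  shows "2 * (\<Sum>i<n. y i * x i) - (\<Sum>l<d. (\<Sum>i<n. y i * Phi i l)\<^sup>2)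
       = (\<Sum>m<n. u m * x m) - (\<Sum>l<d. (\<Sum>i<n. (y i - u i) * Phi i l)\<^sup>2)"
proof -
  define w where "w = (\<lambda>y l. \<Sum>i<n. y i * Phi i l)"
  have bil: "(\<Sum>i<n. y i * x i) = (\<Sum>l<d. w y l * w u l)" for y
  proof -
    have "(\<Sum>i<n. y i * x i) = (\<Sum>i<n. y i * (\<Sum>j<d. Phi i j * (\<Sum>m<n. u m * Phi m j)))"
      using u by simp
    also have "\<dots> = (\<Sum>l<d. w y l * w u l)"
      unfolding w_def by (simp add: sum_distrib_left sum_distrib_right algebra_simps; subst sum.swap; simp add: algebra_simps)
    finally show ?thesis .
  qed
  have wd: "w (\<lambda>i. y i - u i) l = w y l - w u l" for l
    by (simp add: w_def algebra_simps sum_subtractf)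
  have "2 * (\<Sum>i<n. y i * x i) - (\<Sum>l<d. (w y l)\<^sup>2) = (\<Sum>l<d. (w u l)\<^sup>2) - (\<Sum>l<d. (w y l - w u l)\<^sup>2)"
    unfolding bil by (simp add: power2_eq_square algebra_simps sum_subtractf sum.distrib sum_distrib_left)
  also have "(\<Sum>l<d. (w u l)\<^sup>2) = (\<Sum>m<n. u m * x m)"
    using bil[of u] by (simp add: power2_eq_square)
  finally show ?thesis using wd by (simp add: w_def)
qed

lemma sup_repr:
  fixes Phi :: "nat \<Rightarrow> nat \<Rightarrow> real"
  assumes u: "\<forall>i<n. (\<Sum>j<d. Phi i j * (\<Sum>m<n. u m * Phi m j)) = x i"
  shows "(SUP y\<in>PiE {..<n} (\<lambda>_. \<rat>). 2 * (\<Sum>i<n. y i * x i) - (\<Sum>l<d. (\<Sum>i<n. y i * Phi i l)\<^sup>2))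
       = (\<Sum>m<n. u m * x m)"
proof -
  let ?G = "\<lambda>y. 2 * (\<Sum>i<n. y i * x i) - (\<Sum>l<d. (\<Sum>i<n. y i * Phi i l)\<^sup>2)"
  let ?S = "\<Sum>m<n. u m * x m"
  let ?Q = "PiE {..<n} (\<lambda>_. \<rat>) :: (nat \<Rightarrow> real) set"
  have G: "?G y = ?S - (\<Sum>l<d. (\<Sum>i<n. (y i - u i) * Phi i l)\<^sup>2)" for y
    by (rule quad_identity[OF u])
  have le: "?G y \<le> ?S" for y unfolding G by (simp add: sum_nonneg)
  have ne: "?Q \<noteq> {}"
    by (simp add: PiE_eq_empty_iff) (use Rats_0 in blast)
  have bdd: "bdd_above (?G ` ?Q)" using le by (intro bdd_aboveI[where M="?S"]) auto
  have "(SUP y\<in>?Q. ?G y) \<le> ?S" using ne le by (intro cSUP_least) auto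
  moreover have "?S \<le> (SUP y\<in>?Q. ?G y)"
  proof (rule field_le_epsilon)
    fix e :: real assume e: "0 < e"
    define C where "C = (\<Sum>l<d. (\<Sum>i<n. \<bar>Phi i l\<bar>)\<^sup>2)"
    have C0: "0 \<le> C" by (simp add: C_def sum_nonneg)
    define eta where "eta = sqrt (e / (C + 1))"
    have eta0: "0 < eta" using e C0 by (simp add: eta_def)
    have "\<exists>r\<in>\<rat>. u i < r \<and> r < u i + eta" for i
      using Rats_dense_in_real[of "u i" "u i + eta"] eta0 by auto
    then obtain f where f: "\<And>i. f i \<in> \<rat> \<and> u i < f i \<and> f i < u i + eta" by metis
    define y where "y = restrict f {..<n}"
    have yQ: "y \<in> ?Q" using f by (auto simp: y_def)
    have "(\<Sum>l<d. (\<Sum>i<n. (y i - u i) * Phi i l)\<^sup>2) \<le> (\<Sum>l<d. (eta * (\<Sum>i<n. \<bar>Phi i l\<bar>))\<^sup>2)"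
    proof (rule sum_mono)
      fix l
      have "\<bar>\<Sum>i<n. (y i - u i) * Phi i l\<bar> \<le> (\<Sum>i<n. \<bar>(y i - u i) * Phi i l\<bar>)" by (rule sum_abs)
      also have "\<dots> \<le> (\<Sum>i<n. eta * \<bar>Phi i l\<bar>)"
      proof (intro sum_mono)
        fix i assume "i \<in> {..<n}"
        moreover have "\<bar>f i - u i\<bar> \<le> eta" using f[of i] by auto
        ultimately show "\<bar>(y i - u i) * Phi i l\<bar> \<le> eta * \<bar>Phi i l\<bar>"
          by (auto simp: y_def abs_mult intro!: mult_right_mono)
      qed
      finally have "\<bar>\<Sum>i<n. (y i - u i) * Phi i l\<bar> \<le> eta * (\<Sum>i<n. \<bar>Phi i l\<bar>)"
        by (simp add: sum_distrib_left)
      then show "(\<Sum>i<n. (y i - u i) * Phi i l)\<^sup>2 \<le> (eta * (\<Sum>i<n. \<bar>Phi i l\<bar>))\<^sup>2"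
        by (metis abs_ge_zero abs_le_square_iff abs_of_nonneg order_trans)
    qed
    also have "\<dots> = eta\<^sup>2 * C" by (simp only: C_def power_mult_distrib sum_distrib_left[of "eta\<^sup>2"])
    also have "\<dots> = e * C / (C + 1)" using e C0 by (simp add: eta_def)
    also have "\<dots> \<le> e" using e C0 by (simp add: field_simps)
    finally have "?S - e \<le> ?G y" unfolding G by simp
    also have "?G y \<le> (SUP y\<in>?Q. ?G y)" using bdd yQ by (rule cSUP_upper2) simp
    finally show "?S \<le> (SUP y\<in>?Q. ?G y) + e" by simp
  qed
  ultimately show ?thesis by simp
qed

lemma det_bounds:
  fixes omega :: "nat \<times> nat \<Rightarrow> real" and n d s :: nat
  assumes s: "0 < s" "s \<le> d"
    and cpos: "0 < cB" "0 < cS"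
    and EB_lo: "\<And>v. cB * (\<Sum>i<n. (v i)\<^sup>2) \<le> (\<Sum>j\<in>{s..<d}. (\<Sum>i<n. v i * omega (i, j))\<^sup>2)"
    and EB_hi: "\<And>v. (\<Sum>j\<in>{s..<d}. (\<Sum>i<n. v i * omega (i, j))\<^sup>2) \<le> CB * (\<Sum>i<n. (v i)\<^sup>2)"
    and ES_lo: "\<And>w. cS * (\<Sum>j<s. (w j)\<^sup>2) \<le> (\<Sum>i<n. (\<Sum>j<s. w j * omega (i, j))\<^sup>2)"
    and ES_x: "(\<Sum>i<n. (omega (i, 0))\<^sup>2) \<le> CX"
    and u: "\<forall>i<n. (\<Sum>j<d. omega (i, j) * (\<Sum>m<n. u m * omega (m, j))) = omega (i, 0)"
  defines "sig \<equiv> (\<Sum>m<n. u m * omega (m, 0))"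
  shows "0 < sig \<and> sig < 1 \<and> cS * (1 - sig) \<le> CB * sig \<and> cB * sig \<le> CX * (1 - sig)"
proof -
  define W where "W = (\<lambda>j v. \<Sum>i<n. v i * omega (i, j))"
  define x where "x = (\<lambda>i. omega (i, 0))"
  have d0: "0 < d" using s by simp
  have Wsum: "(\<Sum>i<n. v i * x i) = (\<Sum>j<d. W j v * W j u)" for v
  proof -
    have "(\<Sum>i<n. v i * x i) = (\<Sum>i<n. v i * (\<Sum>j<d. omega (i, j) * W j u))"
      using u by (simp add: x_def W_def)
    also have "\<dots> = (\<Sum>j<d. W j v * W j u)"
      unfolding W_def by (simp add: sum_distrib_left sum_distrib_right algebra_simps; subst sum.swap; simp add: algebra_simps)
    finally show ?thesis .
  qed
  have sig_eq: "sig = (\<Sum>j<d. (W j u)\<^sup>2)" using Wsum[of u] by (simp add: sig_def x_def power2_eq_square)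
  have W0: "W 0 v = (\<Sum>i<n. v i * x i)" for v by (simp add: W_def x_def)
  have split0: "(\<Sum>j<d. f j) = f 0 + (\<Sum>j\<in>{1..<d}. f j)" for f :: "nat \<Rightarrow> real"
  proof -
    have "{..<d} = insert 0 {1..<d}" using d0 by auto
    then show ?thesis by simp
  qed
  have rest_u: "(\<Sum>j\<in>{1..<d}. (W j u)\<^sup>2) = sig - sig\<^sup>2"
    using split0[of "\<lambda>j. (W j u)\<^sup>2"] sig_eq W0[of u] by (simp add: sig_def x_def)
  have sub_ge: "(\<Sum>j\<in>{s..<d}. (W j v)\<^sup>2) \<le> (\<Sum>j\<in>{1..<d}. (W j v)\<^sup>2)" for v
    using s by (intro sum_mono2) auto
  define nu where "nu = (\<Sum>i<n. (u i)\<^sup>2)"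
  have lo_u: "cB * nu \<le> sig - sig\<^sup>2"
    using EB_lo[of u] sub_ge[of u] rest_u by (simp add: nu_def W_def)
  have x_lo: "cS \<le> (\<Sum>i<n. (x i)\<^sup>2)"
  proof -
    have "cS * (\<Sum>j<s. ((\<lambda>j. if j = 0 then 1 else 0) j)\<^sup>2) \<le>
        (\<Sum>i<n. (\<Sum>j<s. (\<lambda>j. if j = 0 then 1 else 0) j * omega (i, j))\<^sup>2)" by (rule ES_lo)
    moreover have "(\<Sum>j<s. ((\<lambda>j. if j = 0 then (1::real) else 0) j)\<^sup>2) = 1"
    proof -
      have "(\<Sum>j<s. ((\<lambda>j. if j = 0 then (1::real) else 0) j)\<^sup>2) = (\<Sum>j<s. if j = 0 then 1 else 0)"
        by (rule sum.cong) auto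
      then show ?thesis using s by simp
    qed
    moreover have "(\<Sum>j<s. (\<lambda>j. if j = 0 then (1::real) else 0) j * omega (i, j)) = x i" for i
    proof -
      have "(\<Sum>j<s. (\<lambda>j. if j = 0 then (1::real) else 0) j * omega (i, j)) = (\<Sum>j<s. if j = 0 then omega (i, 0) else 0)"
        by (rule sum.cong) auto
      then show ?thesis using s by (simp add: x_def)
    qed
    ultimately show ?thesis by simp
  qed
  have nu_pos: "0 < nu"
  proof (rule ccontr)
    assume "\<not> 0 < nu"
    moreover have "0 \<le> nu" by (simp add: nu_def sum_nonneg)
    ultimately have "nu = 0" by simp
    then have "\<forall>i\<in>{..<n}. (u i)\<^sup>2 = 0" unfolding nu_def by (subst sum_nonneg_eq_0_iff[symmetric]) auto
    then have "\<forall>i<n. x i = 0" using u by (simp add: x_def)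
    then have "(\<Sum>i<n. (x i)\<^sup>2) = 0" by simp
    then show False using x_lo cpos by simp
  qed
  have sig_nn: "0 \<le> sig" using sig_eq by (simp add: sum_nonneg)
  have sigsig: "0 < sig - sig\<^sup>2" using lo_u mult_pos_pos[OF cpos(1) nu_pos] by linarith
  have "0 < sig * (1 - sig)" using sigsig by (simp add: power2_eq_square algebra_simps)
  then have "(0 < sig \<and> 0 < 1 - sig) \<or> (sig < 0 \<and> 1 - sig < 0)" by (simp add: zero_less_mult_iff)
  then have sig01: "0 < sig" "sig < 1" using sig_nn by auto
  have "sig\<^sup>2 \<le> nu * (\<Sum>i<n. (x i)\<^sup>2)"
    unfolding sig_def nu_def x_def by (rule Cauchy_Schwarz_ineq_sum)
  also have "\<dots> \<le> nu * CX" using ES_x nu_pos by (simp add: x_def)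
  finally have s2: "sig\<^sup>2 \<le> nu * CX" .
  have CX0: "0 \<le> CX" using ES_x x_lo cpos by (simp add: x_def)
  have "cB * sig\<^sup>2 \<le> cB * (nu * CX)" using s2 cpos by (intro mult_left_mono) auto
  also have "\<dots> = (cB * nu) * CX" by simp
  also have "\<dots> \<le> (sig - sig\<^sup>2) * CX" using lo_u CX0 by (intro mult_right_mono) auto
  finally have "cB * sig\<^sup>2 \<le> (sig - sig\<^sup>2) * CX" .
  then have "sig * (cB * sig) \<le> sig * (CX * (1 - sig))"
    by (simp add: power2_eq_square algebra_simps)
  then have up: "cB * sig \<le> CX * (1 - sig)"
    using sig01 by (simp add: mult_le_cancel_left_pos)
  obtain w where w: "\<forall>j<s - 1. dotn n (\<lambda>i. x i - (\<Sum>m<s - 1. w m * omega (i, Suc m))) (\<lambda>i. omega (i, Suc j)) = 0"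
    using proj_exists[where b=x and k="s - 1" and N=n and c="\<lambda>m i. omega (i, Suc m)"] by blast
  define y where "y = (\<lambda>i. x i - (\<Sum>m<s - 1. w m * omega (i, Suc m)))"
  have Wy0: "W j y = 0" if "1 \<le> j" "j < s" for j
  proof -
    have "j - 1 < s - 1" "Suc (j - 1) = j" using that by auto
    then show ?thesis using w by (auto simp: W_def dotn_def y_def algebra_simps)
  qed
  define v where "v = (\<lambda>j. if j = 0 then 1 else - w (j - 1))"
  have yv: "y i = (\<Sum>j<s. v j * omega (i, j))" for i
  proof -
    have "s = Suc (s - 1)" using s by simp
    then have "(\<Sum>j<s. v j * omega (i, j)) = (\<Sum>j<Suc (s - 1). v j * omega (i, j))" by simp
    also have "\<dots> = v 0 * omega (i, 0) + (\<Sum>m<s - 1. v (Suc m) * omega (i, Suc m))"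
      by (rule sum.lessThan_Suc_shift)
    also have "\<dots> = y i" by (simp add: v_def y_def x_def sum_negf)
    finally show ?thesis by simp
  qed
  define ny where "ny = (\<Sum>i<n. (y i)\<^sup>2)"
  have v1: "1 \<le> (\<Sum>j<s. (v j)\<^sup>2)"
  proof -
    have "(\<Sum>j\<in>{0}. (v j)\<^sup>2) \<le> (\<Sum>j<s. (v j)\<^sup>2)" using s by (intro sum_mono2) auto
    then show ?thesis by (simp add: v_def)
  qed
  have ny_lo: "cS \<le> ny"
  proof -
    have "cS * (\<Sum>j<s. (v j)\<^sup>2) \<le> ny" using ES_lo[of v] yv by (simp add: ny_def)
    moreover have "cS \<le> cS * (\<Sum>j<s. (v j)\<^sup>2)" using v1 cpos by simp
    ultimately show ?thesis by simp
  qed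
  have yx: "(\<Sum>i<n. y i * x i) = ny"
  proof -
    have "(\<Sum>i<n. y i * x i) = (\<Sum>i<n. y i * (y i + (\<Sum>m<s - 1. w m * omega (i, Suc m))))"
      by (simp add: y_def)
    also have "\<dots> = ny + (\<Sum>m<s - 1. w m * W (Suc m) y)"
      unfolding ny_def W_def
      by (simp add: algebra_simps sum.distrib power2_eq_square sum_distrib_left; subst sum.swap; simp add: algebra_simps)
    also have "(\<Sum>m<s - 1. w m * W (Suc m) y) = 0"
      by (intro sum.neutral) (auto simp: Wy0)
    finally show ?thesis by simp
  qed
  have Qy: "(\<Sum>j\<in>{1..<d}. (W j y)\<^sup>2) = (\<Sum>j\<in>{s..<d}. (W j y)\<^sup>2)"
  proof -
    have "{1..<d} = {1..<s} \<union> {s..<d}" using s by auto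
    then have "(\<Sum>j\<in>{1..<d}. (W j y)\<^sup>2) = (\<Sum>j\<in>{1..<s}. (W j y)\<^sup>2) + (\<Sum>j\<in>{s..<d}. (W j y)\<^sup>2)"
      by (simp add: sum.union_disjoint ivl_disj_int)
    moreover have "(\<Sum>j\<in>{1..<s}. (W j y)\<^sup>2) = 0" by (intro sum.neutral) (auto simp: Wy0)
    ultimately show ?thesis by simp
  qed
  have Qy_hi: "(\<Sum>j\<in>{1..<d}. (W j y)\<^sup>2) \<le> CB * ny"
    using Qy EB_hi[of y] by (simp add: W_def ny_def)
  have cross: "(\<Sum>j\<in>{1..<d}. W j y * W j u) = (1 - sig) * ny"
    using split0[of "\<lambda>j. W j y * W j u"] Wsum[of y] W0[of y] W0[of u] yx
    by (simp add: sig_def x_def algebra_simps)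
  have "((1 - sig) * ny)\<^sup>2 \<le> (\<Sum>j\<in>{1..<d}. (W j y)\<^sup>2) * (\<Sum>j\<in>{1..<d}. (W j u)\<^sup>2)"
    unfolding cross[symmetric] by (rule Cauchy_Schwarz_ineq_sum)
  also have "\<dots> \<le> (CB * ny) * (sig - sig\<^sup>2)"
    unfolding rest_u using Qy_hi sigsig by (intro mult_right_mono) auto
  finally have "((1 - sig) * ny)\<^sup>2 \<le> (CB * ny) * (sig * (1 - sig))" by (simp add: power2_eq_square algebra_simps)
  then have "(1 - sig) * ny * ((1 - sig) * ny) \<le> (1 - sig) * ny * (CB * sig)"
    by (simp add: power2_eq_square algebra_simps)
  moreover have "0 < (1 - sig) * ny" using sig01 ny_lo cpos by simp
  ultimately have "(1 - sig) * ny \<le> CB * sig" by (simp add: mult_le_cancel_left_pos)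
  moreover have "cS * (1 - sig) \<le> ny * (1 - sig)"
    using ny_lo sig01 by (intro mult_right_mono) auto
  ultimately have lo: "cS * (1 - sig) \<le> CB * sig" by (simp add: mult.commute)
  show ?thesis using sig01 up lo by simp
qed

lemma L2_sq: "(L2_set f A)\<^sup>2 = (\<Sum>i\<in>A. (f i)\<^sup>2)"
  unfolding L2_set_def by (simp add: sum_nonneg)

lemma CS_row: "(\<Sum>i<N. (v i :: real) * m i)\<^sup>2 \<le> (\<Sum>i<N. (v i)\<^sup>2) * (\<Sum>i<N. (m i)\<^sup>2)"
  by (rule Cauchy_Schwarz_ineq_sum)

lemma net_bound:
  fixes M :: "nat \<Rightarrow> nat \<Rightarrow> real" and T :: "nat set" and N :: nat and V :: real
  assumes fin: "finite T" and N: "0 < N" and V: "0 < V"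
    and net: "\<And>k. k \<in> PiE {..<N} (\<lambda>_. {-(16 * int N)..16 * int N}) \<Longrightarrow>
       0 < (\<Sum>i<N. (real_of_int (k i) / (16 * real N))\<^sup>2) \<Longrightarrow>
       V / 4 * (\<Sum>i<N. (real_of_int (k i) / (16 * real N))\<^sup>2)
         \<le> (\<Sum>t\<in>T. (\<Sum>i<N. real_of_int (k i) / (16 * real N) * M t i)\<^sup>2) \<and>
       (\<Sum>t\<in>T. (\<Sum>i<N. real_of_int (k i) / (16 * real N) * M t i)\<^sup>2)
         \<le> 4 * V * (\<Sum>i<N. (real_of_int (k i) / (16 * real N))\<^sup>2)"
    and F: "(\<Sum>t\<in>T. \<Sum>i<N. (M t i)\<^sup>2) \<le> 4 * V * N"
  shows "V / 10 * (\<Sum>i<N. (u i)\<^sup>2) \<le> (\<Sum>t\<in>T. (\<Sum>i<N. u i * M t i)\<^sup>2) \<and>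
         (\<Sum>t\<in>T. (\<Sum>i<N. u i * M t i)\<^sup>2) \<le> 6 * V * (\<Sum>i<N. (u i)\<^sup>2)"
proof -
  define Q where "Q = (\<lambda>v. \<Sum>t\<in>T. (\<Sum>i<N. v i * M t i)\<^sup>2)"
  define L where "L = (\<lambda>v. L2_set (\<lambda>t. \<Sum>i<N. v i * M t i) T)"
  define nr where "nr = (\<lambda>v::nat\<Rightarrow>real. L2_set v {..<N})"
  have LQ: "(L v)\<^sup>2 = Q v" for v by (simp add: L_def Q_def L2_sq)
  have nr2: "(nr v)\<^sup>2 = (\<Sum>i<N. (v i)\<^sup>2)" for v by (simp add: nr_def L2_sq)
  have L0: "0 \<le> L v" for v by (simp add: L_def)
  have nr0: "0 \<le> nr v" for v by (simp add: nr_def)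
  have Ltri: "L (\<lambda>i. a i + b i) \<le> L a + L b" for a b
  proof -
    have "(\<lambda>t. \<Sum>i<N. (a i + b i) * M t i) = (\<lambda>t. (\<Sum>i<N. a i * M t i) + (\<Sum>i<N. b i * M t i))"
      by (simp add: algebra_simps sum.distrib)
    then show ?thesis unfolding L_def by (simp add: L2_set_triangle_ineq)
  qed
  have nrtri: "nr (\<lambda>i. a i + b i) \<le> nr a + nr b" for a b
    unfolding nr_def by (rule L2_set_triangle_ineq)
  have Lneg: "L (\<lambda>i. - a i) = L a" for a
    unfolding L_def by (simp add: L2_set_def sum_negf)
  have Lscale: "Q (\<lambda>i. c * a i) = c\<^sup>2 * Q a" for c a
  proof -
    have "\<And>t. (\<Sum>i<N. c * a i * M t i) = c * (\<Sum>i<N. a i * M t i)"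
      by (simp add: sum_distrib_left mult.assoc)
    then show ?thesis unfolding Q_def by (simp only: power_mult_distrib sum_distrib_left[of "c\<^sup>2"])
  qed
  have QF: "Q v \<le> (\<Sum>i<N. (v i)\<^sup>2) * (\<Sum>t\<in>T. \<Sum>i<N. (M t i)\<^sup>2)" for v
  proof -
    have "Q v \<le> (\<Sum>t\<in>T. (\<Sum>i<N. (v i)\<^sup>2) * (\<Sum>i<N. (M t i)\<^sup>2))"
      unfolding Q_def by (intro sum_mono CS_row)
    also have "\<dots> = (\<Sum>i<N. (v i)\<^sup>2) * (\<Sum>t\<in>T. \<Sum>i<N. (M t i)\<^sup>2)"
      by (rule sum_distrib_left[symmetric])
    finally show ?thesis .
  qed
  show ?thesis
  proof (cases "(\<Sum>i<N. (u i)\<^sup>2) = 0")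
    case True
    then have "\<forall>i\<in>{..<N}. (u i)\<^sup>2 = 0" by (subst sum_nonneg_eq_0_iff[symmetric]) auto
    then have "\<forall>t. (\<Sum>i<N. u i * M t i) = 0" by simp
    then show ?thesis using True by simp
  next
    case False
    define nu where "nu = (\<Sum>i<N. (u i)\<^sup>2)"
    have nu0: "0 < nu" using False by (simp add: nu_def sum_nonneg order_le_neq_trans)
    define rho where "rho = sqrt nu"
    have rho0: "0 < rho" using nu0 by (simp add: rho_def)
    define uh where "uh = (\<lambda>i. u i / rho)"
    have nr_uh2: "(\<Sum>i<N. (uh i)\<^sup>2) = 1"
      using nu0 by (simp add: uh_def power_divide rho_def nu_def flip: sum_divide_distrib)
    have nr_uh: "nr uh = 1" using nr2[of uh] nr_uh2 nr0[of uh]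
      by (metis abs_of_nonneg real_sqrt_abs real_sqrt_one)
    have uh_le: "\<bar>uh i\<bar> \<le> 1" if "i < N" for i
    proof -
      have "(uh i)\<^sup>2 \<le> (\<Sum>i<N. (uh i)\<^sup>2)"
        using that by (intro member_le_sum) auto
      then have "(uh i)\<^sup>2 \<le> 1\<^sup>2" using nr_uh2 by simp
      then show ?thesis by (metis abs_le_square_iff abs_one)
    qed
    define k where "k = restrict (\<lambda>i. round (uh i * (16 * real N))) {..<N}"
    have k_bound: "\<bar>k i\<bar> \<le> 16 * int N" if "i < N" for i
    proof -
      have "\<bar>uh i\<bar> * (16 * real N) \<le> 1 * (16 * real N)"
        using uh_le[OF that] by (intro mult_right_mono) auto
      then have "\<bar>uh i * (16 * real N)\<bar> \<le> 16 * real N" by (simp add: abs_mult)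
      moreover have "\<bar>real_of_int (round (uh i * (16 * real N))) - uh i * (16 * real N)\<bar> \<le> 1/2"
        by (rule of_int_round_abs_le)
      ultimately have "\<bar>real_of_int (round (uh i * (16 * real N)))\<bar> < 16 * real N + 1" by linarith
      then have "\<bar>round (uh i * (16 * real N))\<bar> < 16 * int N + 1" by linarith
      then show ?thesis using that by (simp add: k_def)
    qed
    have kNet: "k \<in> PiE {..<N} (\<lambda>_. {-(16 * int N)..16 * int N})"
    proof -
      have "k i \<in> {-(16 * int N)..16 * int N}" if "i < N" for i
        using k_bound[OF that] by (simp add: abs_le_iff)
      then show ?thesis by (auto simp: k_def PiE_def extensional_def)
    qed
    define z where "z = (\<lambda>i. real_of_int (k i) / (16 * real N))"
    define e where "e = (\<lambda>i. uh i - z i)"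
    have e_le: "\<bar>e i\<bar> \<le> 1 / (32 * real N)" if "i < N" for i
    proof -
      have "\<bar>real_of_int (round (uh i * (16 * real N))) - uh i * (16 * real N)\<bar> \<le> 1/2"
        by (rule of_int_round_abs_le)
      then have "\<bar>z i - uh i\<bar> * (16 * real N) \<le> 1/2"
        using that N by (simp add: z_def k_def field_simps abs_mult[symmetric])
      then show ?thesis using N by (simp add: e_def field_simps abs_minus_commute)
    qed
    have nre2: "(\<Sum>i<N. (e i)\<^sup>2) \<le> 1 / (1024 * real N)"
    proof -
      have "(\<Sum>i<N. (e i)\<^sup>2) \<le> (\<Sum>i<N. (1 / (32 * real N))\<^sup>2)"
        using e_le by (intro sum_mono) (simp add: abs_le_square_iff[symmetric] abs_le_iff)
      also have "\<dots> = 1 / (1024 * real N)" using N by (simp add: power2_eq_square field_simps)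
      finally show ?thesis .
    qed
    have nre: "nr e \<le> 1/32"
    proof -
      have "1 / (1024 * real N) \<le> 1 / 1024" using N by (simp add: field_simps)
      then have "(nr e)\<^sup>2 \<le> (1/32)\<^sup>2" using nre2 unfolding nr2 by (simp add: power2_eq_square)
      then show ?thesis using nr0 by (simp add: power2_le_iff_abs_le)
    qed
    have uhze: "uh = (\<lambda>i. z i + e i)" by (simp add: e_def)
    have zue: "z = (\<lambda>i. uh i + - e i)" by (simp add: e_def)
    have nrneg: "nr (\<lambda>i. - e i) = nr e" by (simp add: nr_def L2_set_def)
    have nrz_lo: "31/32 \<le> nr z" using nrtri[of z e] nre nr_uh uhze by simp
    have nrz_hi: "nr z \<le> 33/32" using nrtri[of uh "\<lambda>i. - e i"] nre nr_uh zue nrneg by simp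
    have "0 < (nr z)\<^sup>2" using nrz_lo by simp
    then have nz_pos: "0 < (\<Sum>i<N. (z i)\<^sup>2)" using nr2[of z] by simp
    have zb: "V / 4 * (\<Sum>i<N. (z i)\<^sup>2) \<le> Q z \<and> Q z \<le> 4 * V * (\<Sum>i<N. (z i)\<^sup>2)"
      using net[OF kNet] nz_pos by (simp add: z_def Q_def)
    define a where "a = sqrt V"
    have a0: "0 < a" using V by (simp add: a_def)
    have V_a: "V = a\<^sup>2" using V by (simp add: a_def)
    have Lz_lo: "a / 2 * nr z \<le> L z"
    proof -
      have "(a / 2 * nr z)\<^sup>2 \<le> (L z)\<^sup>2" using zb by (simp add: LQ power_mult_distrib nr2 V_a power_divide)
      then show ?thesis using L0[of z] a0 nr0[of z] by (simp add: power2_le_iff_abs_le)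
    qed
    have Lz_hi: "L z \<le> 2 * a * nr z"
    proof -
      have "(L z)\<^sup>2 \<le> (2 * a * nr z)\<^sup>2" using zb by (simp add: LQ power_mult_distrib nr2 V_a)
      then show ?thesis using L0[of z] a0 nr0[of z] by (simp add: power2_le_iff_abs_le)
    qed
    have Le: "L e \<le> a / 16"
    proof -
      have "(\<Sum>i<N. (e i)\<^sup>2) * (\<Sum>t\<in>T. \<Sum>i<N. (M t i)\<^sup>2) \<le> (\<Sum>i<N. (e i)\<^sup>2) * (4 * V * N)"
        using F by (intro mult_left_mono) (auto simp: sum_nonneg)
      then have "(L e)\<^sup>2 \<le> (\<Sum>i<N. (e i)\<^sup>2) * (4 * V * N)"
        using QF[of e] by (simp add: LQ)
      also have "\<dots> \<le> 1 / (1024 * real N) * (4 * V * N)"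
        using nre2 V by (intro mult_right_mono) auto
      also have "\<dots> = (a / 16)\<^sup>2" using N by (simp add: V_a power2_eq_square field_simps)
      finally show ?thesis using L0[of e] a0 by (simp add: power2_le_iff_abs_le)
    qed
    have Luh_hi: "L uh \<le> 68 / 32 * a"
    proof -
      have "L uh \<le> L z + L e" using Ltri[of z e] uhze by simp
      also have "\<dots> \<le> 2 * a * (33/32) + a / 16"
      proof -
        have "2 * a * nr z \<le> 2 * a * (33/32)" using nrz_hi a0 by (intro mult_left_mono) auto
        then show ?thesis using Lz_hi Le by linarith
      qed
      finally show ?thesis by simp
    qed
    have Luh_lo: "27 / 64 * a \<le> L uh"
    proof -
      have "L z \<le> L uh + L e" using Ltri[of uh "\<lambda>i. - e i"] zue Lneg[of e] by simp
      moreover have "a / 2 * (31/32) \<le> L z"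
      proof -
        have "a / 2 * (31/32) \<le> a / 2 * nr z" using nrz_lo a0 by (intro mult_left_mono) auto
        then show ?thesis using Lz_lo by linarith
      qed
      ultimately show ?thesis using Le by simp
    qed
    have Quh_lo: "V / 10 \<le> Q uh"
    proof -
      have "(27 / 64 * a)\<^sup>2 \<le> (L uh)\<^sup>2" using Luh_lo a0 by (intro power_mono) auto
      moreover have "(27 / 64 * a)\<^sup>2 = 729 / 4096 * a\<^sup>2" by (simp add: power2_eq_square)
      moreover have "0 \<le> a\<^sup>2" by simp
      ultimately show ?thesis using V_a LQ[of uh] by linarith
    qed
    have Quh_hi: "Q uh \<le> 6 * V"
    proof -
      have "(L uh)\<^sup>2 \<le> (68 / 32 * a)\<^sup>2" using Luh_hi L0 by (intro power_mono) auto
      moreover have "(68 / 32 * a)\<^sup>2 = 4624 / 1024 * a\<^sup>2" by (simp add: power2_eq_square)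
      moreover have "0 \<le> a\<^sup>2" by simp
      ultimately show ?thesis using V_a LQ[of uh] by linarith
    qed
    have uuh: "u = (\<lambda>i. rho * uh i)" using rho0 by (simp add: uh_def)
    have Qu: "Q u = nu * Q uh"
      using Lscale[of rho uh] uuh rho0 nu0 by (simp add: rho_def)
    have A: "nu * (V / 10) \<le> nu * Q uh" using Quh_lo nu0 by (intro mult_left_mono) auto
    have B: "nu * Q uh \<le> nu * (6 * V)" using Quh_hi nu0 by (intro mult_left_mono) auto
    have eq: "(\<Sum>t\<in>T. (\<Sum>i<N. u i * M t i)\<^sup>2) = nu * Q uh" using Qu by (simp add: Q_def)
    have c1: "V / 10 * nu = nu * (V / 10)" "6 * V * nu = nu * (6 * V)" by simp_all
    show ?thesis unfolding eq nu_def[symmetric] c1 using A B by simp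
  qed
qed

lemma nn_integral_normal_density:
  assumes "0 < \<sigma>"
  shows "(\<integral>\<^sup>+ x. ennreal (normal_density \<mu> \<sigma> x) \<partial>lborel) = 1"
proof -
  interpret prob_space "density lborel (\<lambda>x. ennreal (normal_density \<mu> \<sigma> x))"
    by (rule prob_space_normal_density) (rule assms)
  have "emeasure (density lborel (\<lambda>x. ennreal (normal_density \<mu> \<sigma> x))) UNIV = 1"
    using emeasure_space_1 by simp
  then show ?thesis by (simp add: emeasure_density)
qed

lemma normal_exp_sq:
  assumes s: "0 < s" and th: "0 < 1 - 2 * th * s\<^sup>2"
  shows "normal_density 0 s y * exp (th * y\<^sup>2)
       = (1 / sqrt (1 - 2 * th * s\<^sup>2)) * normal_density 0 (s / sqrt (1 - 2 * th * s\<^sup>2)) y"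
proof -
  define c where "c = 1 - 2 * th * s\<^sup>2"
  have c0: "0 < c" using th by (simp add: c_def)
  have e: "- y\<^sup>2 / (2 * s\<^sup>2) + th * y\<^sup>2 = - y\<^sup>2 / (2 * (s / sqrt c)\<^sup>2)"
    using s c0 by (simp add: power_divide c_def field_simps)
  have p: "1 / sqrt (2 * pi * s\<^sup>2) = 1 / sqrt c * (1 / sqrt (2 * pi * (s / sqrt c)\<^sup>2))"
    using s c0 by (simp add: power_divide real_sqrt_divide real_sqrt_mult field_simps)
  have "normal_density 0 s y * exp (th * y\<^sup>2) = 1 / sqrt (2 * pi * s\<^sup>2) * exp (- y\<^sup>2 / (2 * s\<^sup>2) + th * y\<^sup>2)"
    unfolding normal_density_def by (simp add: exp_add[symmetric])
  also have "\<dots> = (1 / sqrt c * (1 / sqrt (2 * pi * (s / sqrt c)\<^sup>2))) * exp (- y\<^sup>2 / (2 * (s / sqrt c)\<^sup>2))"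
    by (simp only: e p)
  also have "\<dots> = (1 / sqrt c) * normal_density 0 (s / sqrt c) y"
    unfolding normal_density_def by simp
  finally show ?thesis by (simp add: c_def)
qed

locale gprod =
  fixes K :: "(nat \<times> nat) set" and sd :: "nat \<times> nat \<Rightarrow> real"
  assumes finK: "finite K" and sd_pos: "\<And>k. k \<in> K \<Longrightarrow> 0 < sd k"
begin

definition "Mk k = density lborel (\<lambda>x. ennreal (normal_density 0 (sd k) x))"
definition "P = PiM K Mk"

lemma prob_Mk: "k \<in> K \<Longrightarrow> prob_space (Mk k)"
  unfolding Mk_def by (rule prob_space_normal_density) (rule sd_pos)

lemma sets_Mk[measurable_cong]: "sets (Mk k) = sets borel"
  by (simp add: Mk_def)

sublocale prob_space P
  unfolding P_def by (rule prob_space_PiM) (rule prob_Mk)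

lemma coord_meas[measurable]: "k \<in> K \<Longrightarrow> (\<lambda>\<omega>. \<omega> k) \<in> borel_measurable P"
proof -
  assume k: "k \<in> K"
  have "(\<lambda>\<omega>. \<omega> k) \<in> measurable P (Mk k)"
    unfolding P_def using k by (rule measurable_component_singleton)
  moreover have "measurable P (Mk k) = measurable P borel" by (rule measurable_cong_sets) (auto simp: sets_Mk)
  ultimately show ?thesis by simp
qed

lemma distr_coord: "k \<in> K \<Longrightarrow> distr P N (\<lambda>\<omega>. \<omega> k) = Mk k" if "sets N = sets borel"
proof -
  assume k: "k \<in> K"
  have "distr P N (\<lambda>\<omega>. \<omega> k) = distr P (Mk k) (\<lambda>\<omega>. \<omega> k)"
    by (rule distr_cong) (simp_all add: sets_Mk that)
  also have "\<dots> = Mk k" unfolding P_def by (rule distr_PiM_component) (simp_all add: prob_Mk k)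
  finally show ?thesis .
qed

lemma coord_distr:
  assumes k: "k \<in> K"
  shows "distributed P lborel (\<lambda>\<omega>. \<omega> k) (\<lambda>x. ennreal (normal_density 0 (sd k) x))"
  unfolding distributed_def
proof (intro conjI)
  show "distr P lborel (\<lambda>\<omega>. \<omega> k) = density lborel (\<lambda>x. ennreal (normal_density 0 (sd k) x))"
    using distr_coord[OF _ k, of lborel] by (simp add: Mk_def)
qed (use k in auto)

lemma coord_indep:
  assumes K0: "K \<noteq> {}"
  shows "indep_vars (\<lambda>_. borel) (\<lambda>k \<omega>. \<omega> k) K"
proof -
  define X where "X = (\<lambda>k \<omega>. if k \<in> K then \<omega> k else (0::real))"
  have rv: "random_variable borel (X k)" for k
    by (cases "k \<in> K") (simp_all add: X_def)
  have sp: "space P = PiE K (\<lambda>k. space (Mk k))" by (simp add: P_def space_PiM)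
  have "distr P (PiM K (\<lambda>_. borel)) (\<lambda>x. \<lambda>k\<in>K. X k x) = distr P (PiM K (\<lambda>_. borel)) (\<lambda>x. x)"
  proof (rule distr_cong)
    fix x assume "x \<in> space P"
    then show "(\<lambda>k\<in>K. X k x) = x" by (auto simp: sp X_def PiE_def extensional_def fun_eq_iff)
  qed simp_all
  also have "\<dots> = P" by (rule distr_id2) (unfold P_def, rule sets_PiM_cong, simp_all add: sets_Mk)
  also have "P = PiM K (\<lambda>k. distr P borel (X k))"
    unfolding P_def
  proof (rule PiM_cong)
    fix k assume k: "k \<in> K"
    have "distr (PiM K Mk) borel (X k) = distr P borel (\<lambda>\<omega>. \<omega> k)"
      by (rule distr_cong) (simp_all add: X_def k P_def)
    then show "Mk k = distr (PiM K Mk) borel (X k)" using distr_coord[OF _ k, of borel] by simp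
  qed simp
  finally have "indep_vars (\<lambda>_. borel) X K"
    using indep_vars_iff_distr_eq_PiM[OF K0 rv] by (simp add: P_def)
  then show ?thesis by (rule indep_vars_cong[THEN iffD1, rotated 3]) (auto simp: X_def fun_eq_iff)
qed

lemma lin_normal:
  assumes B: "B \<subseteq> K" and K0: "K \<noteq> {}" and v: "0 < (\<Sum>k\<in>B. (a k)\<^sup>2 * (sd k)\<^sup>2)"
  shows "distributed P lborel (\<lambda>\<omega>. \<Sum>k\<in>B. a k * \<omega> k)
           (\<lambda>x. ennreal (normal_density 0 (sqrt (\<Sum>k\<in>B. (a k)\<^sup>2 * (sd k)\<^sup>2)) x))"
proof -
  define B' where "B' = {k\<in>B. a k \<noteq> 0}"
  have finB: "finite B" using B finK by (rule finite_subset)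
  have finB': "finite B'" using finB by (simp add: B'_def)
  have B'B: "B' \<subseteq> B" by (auto simp: B'_def)
  have sumB: "(\<Sum>k\<in>B. f k) = (\<Sum>k\<in>B'. f k)" if "\<And>k. k \<in> B \<Longrightarrow> a k = 0 \<Longrightarrow> f k = 0" for f :: "nat \<times> nat \<Rightarrow> real"
    using that finB by (intro sum.mono_neutral_right) (auto simp: B'_def)
  have B'ne: "B' \<noteq> {}"
  proof
    assume "B' = {}"
    then have "(\<Sum>k\<in>B. (a k)\<^sup>2 * (sd k)\<^sup>2) = 0" using sumB[of "\<lambda>k. (a k)\<^sup>2 * (sd k)\<^sup>2"] by simp
    then show False using v by simp
  qed
  have pos: "0 < \<bar>a k\<bar> * sd k" if "k \<in> B'" for k
  proof -
    have "k \<in> K" "a k \<noteq> 0" using that B by (auto simp: B'_def)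
    then show ?thesis using sd_pos by simp
  qed
  have dist: "distributed P lborel (\<lambda>\<omega>. a k * \<omega> k) (\<lambda>x. ennreal (normal_density 0 (\<bar>a k\<bar> * sd k) x))"
    if k: "k \<in> B'" for k
  proof -
    have kK: "k \<in> K" using k B by (auto simp: B'_def)
    have "distributed P lborel (\<lambda>\<omega>. 0 + a k * \<omega> k) (\<lambda>x. ennreal (normal_density (0 + a k * 0) (\<bar>a k\<bar> * sd k) x))"
      by (rule normal_density_affine[OF coord_distr[OF kK]]) (use k sd_pos[OF kK] in \<open>auto simp: B'_def\<close>)
    then show ?thesis by simp
  qed
  have ind: "indep_vars (\<lambda>_. borel) (\<lambda>k \<omega>. a k * \<omega> k) B'"
  proof -
    have "indep_vars (\<lambda>_. borel) (\<lambda>k \<omega>. \<omega> k) B'"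
      using coord_indep[OF K0] B'B B by (rule indep_vars_subset[OF _ order_trans])
    then have "indep_vars (\<lambda>_. borel) (\<lambda>k x. (\<lambda>y. a k * y) ((\<lambda>\<omega>. \<omega> k) x)) B'"
      by (rule indep_vars_compose2) simp
    then show ?thesis by simp
  qed
  have "distributed P lborel (\<lambda>\<omega>. \<Sum>k\<in>B'. a k * \<omega> k)
      (\<lambda>x. ennreal (normal_density (\<Sum>k\<in>B'. 0) (sqrt (\<Sum>k\<in>B'. (\<bar>a k\<bar> * sd k)\<^sup>2)) x))"
    by (rule sum_indep_normal[OF finB' B'ne ind pos dist])
  moreover have "(\<lambda>\<omega>. \<Sum>k\<in>B'. a k * \<omega> k) = (\<lambda>\<omega>. \<Sum>k\<in>B. a k * \<omega> k)"
    by (rule ext, rule sumB[symmetric]) simp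
  moreover have "(\<Sum>k\<in>B'. (\<bar>a k\<bar> * sd k)\<^sup>2) = (\<Sum>k\<in>B. (a k)\<^sup>2 * (sd k)\<^sup>2)"
    by (subst sumB[of "\<lambda>k. (a k)\<^sup>2 * (sd k)\<^sup>2"]) (auto simp: power_mult_distrib)
  ultimately show ?thesis by simp
qed

lemma group_indep:
  assumes K0: "K \<noteq> {}" and BK: "\<And>t. t \<in> T \<Longrightarrow> B t \<subseteq> K" and dj: "disjoint_family_on B T"
  shows "indep_vars (\<lambda>_. borel) (\<lambda>t \<omega>. \<Sum>k\<in>B t. a k * \<omega> k) T"
proof -
  have "indep_vars (\<lambda>t. PiM (B t) (\<lambda>_. borel)) (\<lambda>t \<omega>. restrict (\<lambda>k. \<omega> k) (B t)) T"
    by (rule indep_vars_restrict[OF coord_indep[OF K0] BK dj])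
  then have "indep_vars (\<lambda>_. borel) (\<lambda>t x. (\<lambda>f. \<Sum>k\<in>B t. a k * f k) (restrict (\<lambda>k. x k) (B t))) T"
  proof (rule indep_vars_compose2)
    fix t assume "t \<in> T"
    show "(\<lambda>f. \<Sum>k\<in>B t. a k * f k) \<in> borel_measurable (PiM (B t) (\<lambda>_. borel))"
    proof (intro borel_measurable_sum borel_measurable_times borel_measurable_const)
      fix k assume "k \<in> B t"
      then show "(\<lambda>x. x k) \<in> borel_measurable (PiM (B t) (\<lambda>_. borel))"
        by (rule measurable_component_singleton)
    qed
  qed
  moreover have "(\<lambda>f. \<Sum>k\<in>B t. a k * f k) (restrict (\<lambda>k. x k) (B t)) = (\<Sum>k\<in>B t. a k * x k)" for t x
    by (simp add: restrict_def)
  ultimately show ?thesis by simp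
qed

lemma mgf:
  assumes dist: "distributed P lborel Y (\<lambda>x. ennreal (normal_density 0 sg x))"
    and sg: "0 < sg" and th: "0 < 1 - 2 * th * sg\<^sup>2"
  shows "(\<integral>\<^sup>+\<omega>. ennreal (exp (th * (Y \<omega>)\<^sup>2)) \<partial>P) = ennreal (1 / sqrt (1 - 2 * th * sg\<^sup>2))"
proof -
  define c where "c = 1 / sqrt (1 - 2 * th * sg\<^sup>2)"
  have c0: "0 \<le> c" using th by (simp add: c_def)
  have Ym: "Y \<in> measurable P lborel" and D: "distr P lborel Y = density lborel (\<lambda>x. ennreal (normal_density 0 sg x))"
    using dist by (auto simp: distributed_def)
  have "(\<integral>\<^sup>+\<omega>. ennreal (exp (th * (Y \<omega>)\<^sup>2)) \<partial>P) = (\<integral>\<^sup>+y. ennreal (exp (th * y\<^sup>2)) \<partial>distr P lborel Y)"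
    by (rule nn_integral_distr[symmetric]) (use Ym in simp_all)
  also have "\<dots> = (\<integral>\<^sup>+y. ennreal (normal_density 0 sg y) * ennreal (exp (th * y\<^sup>2)) \<partial>lborel)"
    unfolding D by (rule nn_integral_density) simp_all
  also have "\<dots> = (\<integral>\<^sup>+y. ennreal c * ennreal (normal_density 0 (sg / sqrt (1 - 2 * th * sg\<^sup>2)) y) \<partial>lborel)"
  proof (rule nn_integral_cong)
    fix y :: real
    have "ennreal (normal_density 0 sg y) * ennreal (exp (th * y\<^sup>2)) = ennreal (normal_density 0 sg y * exp (th * y\<^sup>2))"
      by (rule ennreal_mult[symmetric]) auto
    also have "\<dots> = ennreal (c * normal_density 0 (sg / sqrt (1 - 2 * th * sg\<^sup>2)) y)"
      using normal_exp_sq[OF sg th] by (simp add: c_def)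
    also have "\<dots> = ennreal c * ennreal (normal_density 0 (sg / sqrt (1 - 2 * th * sg\<^sup>2)) y)"
      by (rule ennreal_mult) (use c0 in auto)
    finally show "ennreal (normal_density 0 sg y) * ennreal (exp (th * y\<^sup>2)) = \<dots>" .
  qed
  also have "\<dots> = ennreal c * (\<integral>\<^sup>+y. ennreal (normal_density 0 (sg / sqrt (1 - 2 * th * sg\<^sup>2)) y) \<partial>lborel)"
    by (rule nn_integral_cmult) simp
  also have "\<dots> = ennreal c" using sg th by (simp add: nn_integral_normal_density)
  finally show ?thesis by (simp add: c_def)
qed

lemma chernoff:
  assumes K0: "K \<noteq> {}" and finT: "finite T" and BK: "\<And>t. t \<in> T \<Longrightarrow> B t \<subseteq> K"
    and dj: "disjoint_family_on B T"
    and v: "\<And>t. t \<in> T \<Longrightarrow> (\<Sum>k\<in>B t. (a k)\<^sup>2 * (sd k)\<^sup>2) = v" and v0: "0 < v"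
    and th: "0 < 1 - 2 * th * v"
  shows "measure P {\<omega>\<in>space P. th * c \<le> th * (\<Sum>t\<in>T. (\<Sum>k\<in>B t. a k * \<omega> k)\<^sup>2)}
          \<le> exp (- th * c) * (1 / sqrt (1 - 2 * th * v)) ^ card T"
proof -
  define Y where "Y = (\<lambda>t \<omega>. \<Sum>k\<in>B t. a k * \<omega> k)"
  define S where "S = (\<lambda>\<omega>. \<Sum>t\<in>T. (Y t \<omega>)\<^sup>2)"
  define A where "A = {\<omega>\<in>space P. th * c \<le> th * S \<omega>}"
  have Ym: "Y t \<in> borel_measurable P" if "t \<in> T" for t
    unfolding Y_def
  proof (intro borel_measurable_sum borel_measurable_times borel_measurable_const)
    fix k assume "k \<in> B t"
    then show "(\<lambda>\<omega>. \<omega> k) \<in> borel_measurable P" using BK[OF that] by (intro coord_meas) auto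
  qed
  have Sm[measurable]: "S \<in> borel_measurable P" unfolding S_def using Ym
    by (intro borel_measurable_sum borel_measurable_power) auto
  have A: "A \<in> sets P" unfolding A_def by measurable
  have dist: "distributed P lborel (Y t) (\<lambda>x. ennreal (normal_density 0 (sqrt v) x))" if "t \<in> T" for t
    using lin_normal[OF BK[OF that] K0, of a] v[OF that] v0 by (simp add: Y_def)
  have ind: "indep_vars (\<lambda>_. borel) (\<lambda>t \<omega>. ennreal (exp (th * (Y t \<omega>)\<^sup>2))) T"
  proof -
    have "indep_vars (\<lambda>_. borel) Y T" unfolding Y_def by (rule group_indep[OF K0 BK dj])
    then have "indep_vars (\<lambda>_. borel) (\<lambda>t x. (\<lambda>y. ennreal (exp (th * y\<^sup>2))) (Y t x)) T"
      by (rule indep_vars_compose2) simp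
    then show ?thesis by simp
  qed
  have "emeasure P A = (\<integral>\<^sup>+\<omega>. indicator A \<omega> \<partial>P)" using A by simp
  also have "\<dots> \<le> (\<integral>\<^sup>+\<omega>. ennreal (exp (- th * c)) * (\<Prod>t\<in>T. ennreal (exp (th * (Y t \<omega>)\<^sup>2))) \<partial>P)"
  proof (rule nn_integral_mono)
    fix \<omega> assume "\<omega> \<in> space P"
    have "(\<Prod>t\<in>T. ennreal (exp (th * (Y t \<omega>)\<^sup>2))) = ennreal (\<Prod>t\<in>T. exp (th * (Y t \<omega>)\<^sup>2))"
      by (rule prod_ennreal) simp
    also have "(\<Prod>t\<in>T. exp (th * (Y t \<omega>)\<^sup>2)) = exp (th * S \<omega>)"
      using finT by (simp add: S_def exp_sum sum_distrib_left)
    finally have pe: "ennreal (exp (- th * c)) * (\<Prod>t\<in>T. ennreal (exp (th * (Y t \<omega>)\<^sup>2))) = ennreal (exp (th * S \<omega> - th * c))"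
      by (simp add: ennreal_mult[symmetric] exp_add[symmetric])
    show "indicator A \<omega> \<le> ennreal (exp (- th * c)) * (\<Prod>t\<in>T. ennreal (exp (th * (Y t \<omega>)\<^sup>2)))"
      unfolding pe by (auto simp: indicator_def A_def)
  qed
  also have "\<dots> = ennreal (exp (- th * c)) * (\<integral>\<^sup>+\<omega>. (\<Prod>t\<in>T. ennreal (exp (th * (Y t \<omega>)\<^sup>2))) \<partial>P)"
    by (rule nn_integral_cmult) (use Ym in \<open>auto intro!: borel_measurable_prod_ennreal\<close>)
  also have "(\<integral>\<^sup>+\<omega>. (\<Prod>t\<in>T. ennreal (exp (th * (Y t \<omega>)\<^sup>2))) \<partial>P) = (\<Prod>t\<in>T. \<integral>\<^sup>+\<omega>. ennreal (exp (th * (Y t \<omega>)\<^sup>2)) \<partial>P)"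
    by (rule indep_vars_nn_integral[OF finT ind]) simp
  also have "\<dots> = (\<Prod>t\<in>T. ennreal (1 / sqrt (1 - 2 * th * v)))"
  proof (rule prod.cong)
    fix t assume t: "t \<in> T"
    show "(\<integral>\<^sup>+\<omega>. ennreal (exp (th * (Y t \<omega>)\<^sup>2)) \<partial>P) = ennreal (1 / sqrt (1 - 2 * th * v))"
      using mgf[OF dist[OF t], of th] v0 th by simp
  qed simp
  also have "\<dots> = ennreal ((1 / sqrt (1 - 2 * th * v)) ^ card T)"
    using th by (simp add: ennreal_power[symmetric])
  finally have "emeasure P A \<le> ennreal (exp (- th * c)) * ennreal ((1 / sqrt (1 - 2 * th * v)) ^ card T)" .
  also have "\<dots> = ennreal (exp (- th * c) * (1 / sqrt (1 - 2 * th * v)) ^ card T)"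
    by (rule ennreal_mult[symmetric]) (use th in auto)
  finally have "emeasure P A \<le> ennreal (exp (- th * c) * (1 / sqrt (1 - 2 * th * v)) ^ card T)" .
  then show ?thesis
    unfolding emeasure_eq_measure A_def S_def Y_def
    by (subst (asm) ennreal_le_iff) (use th in auto)
qed

lemma two_le_exp1: "2 \<le> exp (1::real)"
  using exp_lower_Taylor_quadratic[of 1] by simp

lemma sqrt2_le: "sqrt 2 \<le> exp (1/2 :: real)"
proof -
  have "exp (1/2 :: real) ^ 2 = exp 1" by (simp flip: exp_of_nat_mult)
  then have "2 \<le> exp (1/2 :: real) ^ 2" using two_le_exp1 by simp
  then have "sqrt 2 \<le> sqrt (exp (1/2 :: real) ^ 2)" by (rule real_sqrt_le_mono)
  then show ?thesis by simp
qed

lemma isqrt3_le: "1 / sqrt 3 \<le> exp (- 1/2 :: real)"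
proof -
  have "exp (1/2 :: real) ^ 2 = exp 1" by (simp flip: exp_of_nat_mult)
  then have "exp (1/2 :: real) ^ 2 \<le> 3" using exp_le by simp
  then have "exp (1/2 :: real) \<le> sqrt 3" by (simp add: real_le_rsqrt)
  then have "1 / sqrt 3 \<le> 1 / exp (1/2 :: real)" by (simp add: frac_le)
  then show ?thesis by (simp add: exp_minus inverse_eq_divide)
qed

lemma tail_upper:
  assumes K0: "K \<noteq> {}" and finT: "finite T" and BK: "\<And>t. t \<in> T \<Longrightarrow> B t \<subseteq> K"
    and dj: "disjoint_family_on B T"
    and v: "\<And>t. t \<in> T \<Longrightarrow> (\<Sum>k\<in>B t. (a k)\<^sup>2 * (sd k)\<^sup>2) = v" and v0: "0 < v"
  shows "measure P {\<omega>\<in>space P. 4 * v * card T \<le> (\<Sum>t\<in>T. (\<Sum>k\<in>B t. a k * \<omega> k)\<^sup>2)}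
          \<le> exp (- real (card T) / 2)"
proof -
  define th where "th = 1 / (4 * v)"
  have th0: "0 < th" using v0 by (simp add: th_def)
  have th1: "1 - 2 * th * v = 1 / 2" using v0 by (simp add: th_def field_simps)
  have set_eq: "{\<omega>\<in>space P. 4 * v * card T \<le> (\<Sum>t\<in>T. (\<Sum>k\<in>B t. a k * \<omega> k)\<^sup>2)}
      = {\<omega>\<in>space P. th * (4 * v * card T) \<le> th * (\<Sum>t\<in>T. (\<Sum>k\<in>B t. a k * \<omega> k)\<^sup>2)}"
    using th0 by (auto simp: mult_le_cancel_left_pos)
  have "measure P {\<omega>\<in>space P. 4 * v * card T \<le> (\<Sum>t\<in>T. (\<Sum>k\<in>B t. a k * \<omega> k)\<^sup>2)}
      \<le> exp (- th * (4 * v * card T)) * (1 / sqrt (1 - 2 * th * v)) ^ card T"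
  proof -
    have "0 < 1 - 2 * th * v" using th1 by simp
    from chernoff[OF K0 finT BK dj v v0 this, of "4 * v * real (card T)"] show ?thesis unfolding set_eq .
  qed
  also have "\<dots> = exp (- real (card T)) * sqrt 2 ^ card T"
    using v0 by (simp add: th1 th_def real_sqrt_divide)
  also have "\<dots> \<le> exp (- real (card T)) * exp (1/2) ^ card T"
    by (intro mult_left_mono power_mono sqrt2_le) auto
  also have "\<dots> = exp (- real (card T) / 2)"
    by (simp flip: exp_of_nat_mult exp_add)
  finally show ?thesis .
qed

lemma tail_lower:
  assumes K0: "K \<noteq> {}" and finT: "finite T" and BK: "\<And>t. t \<in> T \<Longrightarrow> B t \<subseteq> K"
    and dj: "disjoint_family_on B T"
    and v: "\<And>t. t \<in> T \<Longrightarrow> (\<Sum>k\<in>B t. (a k)\<^sup>2 * (sd k)\<^sup>2) = v" and v0: "0 < v"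
  shows "measure P {\<omega>\<in>space P. (\<Sum>t\<in>T. (\<Sum>k\<in>B t. a k * \<omega> k)\<^sup>2) \<le> v * card T / 4}
          \<le> exp (- real (card T) / 4)"
proof -
  define th where "th = - 1 / v"
  have th0: "th < 0" using v0 by (simp add: th_def)
  have th1: "1 - 2 * th * v = 3" using v0 by (simp add: th_def field_simps)
  have set_eq: "{\<omega>\<in>space P. (\<Sum>t\<in>T. (\<Sum>k\<in>B t. a k * \<omega> k)\<^sup>2) \<le> v * card T / 4}
      = {\<omega>\<in>space P. th * (v * card T / 4) \<le> th * (\<Sum>t\<in>T. (\<Sum>k\<in>B t. a k * \<omega> k)\<^sup>2)}"
    using th0 by (auto simp: mult_le_cancel_left)
  have "measure P {\<omega>\<in>space P. (\<Sum>t\<in>T. (\<Sum>k\<in>B t. a k * \<omega> k)\<^sup>2) \<le> v * card T / 4}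
      \<le> exp (- th * (v * card T / 4)) * (1 / sqrt (1 - 2 * th * v)) ^ card T"
  proof -
    have "0 < 1 - 2 * th * v" using th1 by simp
    from chernoff[OF K0 finT BK dj v v0 this, of "v * real (card T) / 4"] show ?thesis unfolding set_eq .
  qed
  also have "\<dots> = exp (real (card T) / 4) * (1 / sqrt 3) ^ card T"
    using v0 by (simp add: th1 th_def)
  also have "\<dots> \<le> exp (real (card T) / 4) * exp (- 1/2) ^ card T"
    by (intro mult_left_mono power_mono isqrt3_le) auto
  also have "\<dots> = exp (- real (card T) / 4)"
    by (simp flip: exp_of_nat_mult exp_add)
  finally show ?thesis .
qed

lemma net_event:
  fixes pos :: "nat \<Rightarrow> nat \<Rightarrow> nat \<times> nat" and ci :: "nat \<times> nat \<Rightarrow> nat" and T :: "nat set"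
    and N :: nat and sz :: real
  assumes K0: "K \<noteq> {}" and finT: "finite T" and T0: "T \<noteq> {}" and N0: "0 < N" and sz: "0 < sz"
    and pos_K: "\<And>t i. t \<in> T \<Longrightarrow> i < N \<Longrightarrow> pos t i \<in> K"
    and pos_inj: "\<And>t i t' i'. t \<in> T \<Longrightarrow> i < N \<Longrightarrow> t' \<in> T \<Longrightarrow> i' < N \<Longrightarrow> pos t i = pos t' i' \<Longrightarrow> t = t' \<and> i = i'"
    and ci: "\<And>t i. t \<in> T \<Longrightarrow> i < N \<Longrightarrow> ci (pos t i) = i"
    and sdc: "\<And>t i. t \<in> T \<Longrightarrow> i < N \<Longrightarrow> sd (pos t i) = sz"
  defines "V \<equiv> sz\<^sup>2 * real (card T)"
  defines "Net \<equiv> PiE {..<N} (\<lambda>_. {-(16 * int N)..16 * int N})"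
  defines "zz \<equiv> \<lambda>(k::nat\<Rightarrow>int) i. real_of_int (k i) / (16 * real N)"
  defines "Q \<equiv> \<lambda>u \<omega>. \<Sum>t\<in>T. (\<Sum>i<N. u i * \<omega> (pos t i))\<^sup>2"
  defines "nz \<equiv> \<lambda>u. \<Sum>i<N. (u i)\<^sup>2"
  defines "Bad \<equiv> (\<Union>k\<in>Net. {\<omega>\<in>space P. 0 < nz (zz k) \<and> Q (zz k) \<omega> \<le> V / 4 * nz (zz k)}
                    \<union> {\<omega>\<in>space P. 0 < nz (zz k) \<and> 4 * V * nz (zz k) \<le> Q (zz k) \<omega>})
                \<union> {\<omega>\<in>space P. 4 * V * N \<le> (\<Sum>t\<in>T. \<Sum>i<N. (\<omega> (pos t i))\<^sup>2)}"
  shows "\<exists>Bad. Bad \<in> sets P \<and>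
      measure P Bad \<le> real ((32 * N + 1) ^ N) * (2 * exp (- real (card T) / 4)) + exp (- real (N * card T) / 2) \<and>
      (\<forall>\<omega> u. \<omega> \<in> space P - Bad \<longrightarrow>
         sz\<^sup>2 * real (card T) / 10 * (\<Sum>i<N. (u i)\<^sup>2) \<le> (\<Sum>t\<in>T. (\<Sum>i<N. u i * \<omega> (pos t i))\<^sup>2) \<and>
         (\<Sum>t\<in>T. (\<Sum>i<N. u i * \<omega> (pos t i))\<^sup>2) \<le> 6 * (sz\<^sup>2 * real (card T)) * (\<Sum>i<N. (u i)\<^sup>2))"
proof -
  have cm: "(\<lambda>\<omega>. \<omega> (pos t i)) \<in> borel_measurable P" if "t \<in> T" "i < N" for t i
    using pos_K[OF that] by (rule coord_meas)
  have Qm: "Q u \<in> borel_measurable P" for u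
    unfolding Q_def using cm by (intro borel_measurable_sum borel_measurable_power borel_measurable_times borel_measurable_const) auto
  have Fm: "(\<lambda>\<omega>. \<Sum>t\<in>T. \<Sum>i<N. (\<omega> (pos t i))\<^sup>2) \<in> borel_measurable P"
    using cm by (intro borel_measurable_sum borel_measurable_power) auto
  have finNet: "finite Net" unfolding Net_def by (intro finite_PiE) auto
  define lo where "lo = (\<lambda>k. {\<omega>\<in>space P. 0 < nz (zz k) \<and> Q (zz k) \<omega> \<le> V / 4 * nz (zz k)})"
  define hi where "hi = (\<lambda>k. {\<omega>\<in>space P. 0 < nz (zz k) \<and> 4 * V * nz (zz k) \<le> Q (zz k) \<omega>})"
  define Fr where "Fr = {\<omega>\<in>space P. 4 * V * N \<le> (\<Sum>t\<in>T. \<Sum>i<N. (\<omega> (pos t i))\<^sup>2)}"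
  have Bad_eq: "Bad = (\<Union>k\<in>Net. lo k \<union> hi k) \<union> Fr" by (simp add: Bad_def lo_def hi_def Fr_def)
  have lo_m: "lo k \<in> sets P" for k
  proof -
    have [measurable]: "Q (zz k) \<in> borel_measurable P" by (rule Qm)
    show ?thesis unfolding lo_def by measurable
  qed
  have hi_m: "hi k \<in> sets P" for k
  proof -
    have [measurable]: "Q (zz k) \<in> borel_measurable P" by (rule Qm)
    show ?thesis unfolding hi_def by measurable
  qed
  have Fr_m: "Fr \<in> sets P"
  proof -
    note Fm[measurable]
    show ?thesis unfolding Fr_def by measurable
  qed
  have Bad_m: "Bad \<in> sets P" unfolding Bad_eq
    by (intro sets.Un sets.finite_UN finNet lo_m hi_m Fr_m)
  define B where "B = (\<lambda>t. pos t ` {..<N})"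
  have BK: "B t \<subseteq> K" if "t \<in> T" for t using pos_K that by (auto simp: B_def)
  have dj: "disjoint_family_on B T"
    unfolding disjoint_family_on_def B_def using pos_inj by blast
  have inj: "inj_on (pos t) {..<N}" if "t \<in> T" for t
    using pos_inj[OF that _ that] by (auto simp: inj_on_def)
  have reidx: "(\<Sum>k\<in>B t. f k) = (\<Sum>i<N. f (pos t i))" if "t \<in> T" for t f
    unfolding B_def by (rule sum.reindex[OF inj[OF that], unfolded comp_def])
  have Qgrp: "Q u \<omega> = (\<Sum>t\<in>T. (\<Sum>k\<in>B t. u (ci k) * \<omega> k)\<^sup>2)" for u \<omega>
    unfolding Q_def by (intro sum.cong refl) (simp add: reidx ci)
  have vgrp: "(\<Sum>k\<in>B t. (u (ci k))\<^sup>2 * (sd k)\<^sup>2) = sz\<^sup>2 * nz u" if "t \<in> T" for t u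
    using that by (simp add: reidx ci sdc nz_def sum_distrib_left mult.commute)
  have lo_b: "measure P (lo k) \<le> exp (- real (card T) / 4)" for k
  proof (cases "0 < nz (zz k)")
    case True
    have "lo k = {\<omega>\<in>space P. (\<Sum>t\<in>T. (\<Sum>k'\<in>B t. zz k (ci k') * \<omega> k')\<^sup>2) \<le> (sz\<^sup>2 * nz (zz k)) * card T / 4}"
      using True by (auto simp: lo_def Qgrp V_def mult_ac)
    also have "measure P \<dots> \<le> exp (- real (card T) / 4)"
      by (rule tail_lower[OF K0 finT BK dj vgrp]) (use True sz in auto)
    finally show ?thesis .
  next
    case False then show ?thesis by (simp add: lo_def)
  qed
  have hi_b: "measure P (hi k) \<le> exp (- real (card T) / 4)" for k
  proof (cases "0 < nz (zz k)")
    case True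
    have "hi k = {\<omega>\<in>space P. 4 * (sz\<^sup>2 * nz (zz k)) * card T \<le> (\<Sum>t\<in>T. (\<Sum>k'\<in>B t. zz k (ci k') * \<omega> k')\<^sup>2)}"
      using True by (auto simp: hi_def Qgrp V_def algebra_simps)
    also have "measure P \<dots> \<le> exp (- real (card T) / 2)"
      by (rule tail_upper[OF K0 finT BK dj vgrp]) (use True sz in auto)
    also have "\<dots> \<le> exp (- real (card T) / 4)" by simp
    finally show ?thesis .
  next
    case False then show ?thesis by (simp add: hi_def)
  qed
  have Fr_b: "measure P Fr \<le> exp (- real (N * card T) / 2)"
  proof -
    define TT where "TT = T \<times> {..<N}"
    define B1 where "B1 = (\<lambda>(t, i). {pos t i})"
    have finTT: "finite TT" using finT by (simp add: TT_def)
    have BK1: "B1 ti \<subseteq> K" if "ti \<in> TT" for ti using that pos_K by (auto simp: TT_def B1_def)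
    have dj1: "disjoint_family_on B1 TT"
      unfolding disjoint_family_on_def TT_def B1_def using pos_inj by fastforce
    have v1: "(\<Sum>k\<in>B1 ti. ((\<lambda>_. 1::real) k)\<^sup>2 * (sd k)\<^sup>2) = sz\<^sup>2" if "ti \<in> TT" for ti
      using that sdc by (auto simp: TT_def B1_def)
    have cTT: "card TT = card T * N" by (simp add: TT_def card_cartesian_product)
    have "Fr = {\<omega>\<in>space P. 4 * sz\<^sup>2 * card TT \<le> (\<Sum>ti\<in>TT. (\<Sum>k\<in>B1 ti. 1 * \<omega> k)\<^sup>2)}"
    proof -
      have "(\<Sum>ti\<in>TT. (\<Sum>k\<in>B1 ti. 1 * \<omega> k)\<^sup>2) = (\<Sum>t\<in>T. \<Sum>i<N. (\<omega> (pos t i))\<^sup>2)" for \<omega> :: "nat \<times> nat \<Rightarrow> real"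
        by (simp add: TT_def B1_def sum.cartesian_product split_beta)
      then show ?thesis by (simp add: Fr_def V_def cTT algebra_simps)
    qed
    also have "measure P \<dots> \<le> exp (- real (card TT) / 2)"
      by (rule tail_upper[OF K0 finTT BK1 dj1 v1]) (use sz in auto)
    finally show ?thesis by (simp add: cTT mult.commute)
  qed
  have cardNet: "card Net = (32 * N + 1) ^ N"
  proof -
    have "card {-(16 * int N)..16 * int N} = 32 * N + 1" by simp
    then show ?thesis by (simp add: Net_def card_PiE)
  qed
  have Mb: "measure P Bad \<le> real ((32 * N + 1) ^ N) * (2 * exp (- real (card T) / 4)) + exp (- real (N * card T) / 2)"
  proof -
    have "measure P Bad \<le> measure P (\<Union>k\<in>Net. lo k \<union> hi k) + measure P Fr"
      unfolding Bad_eq by (rule measure_Un_le) (use lo_m hi_m finNet Fr_m in auto)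
    also have "measure P (\<Union>k\<in>Net. lo k \<union> hi k) \<le> (\<Sum>k\<in>Net. measure P (lo k \<union> hi k))"
      by (rule measure_UNION_le[OF finNet]) (use lo_m hi_m in auto)
    also have "\<dots> \<le> (\<Sum>k\<in>Net. 2 * exp (- real (card T) / 4))"
    proof (rule sum_mono)
      fix k
      have "measure P (lo k \<union> hi k) \<le> measure P (lo k) + measure P (hi k)"
        by (rule measure_Un_le) (use lo_m hi_m in auto)
      then show "measure P (lo k \<union> hi k) \<le> 2 * exp (- real (card T) / 4)" using lo_b[of k] hi_b[of k] by simp
    qed
    also have "\<dots> = real ((32 * N + 1) ^ N) * (2 * exp (- real (card T) / 4))"
      by (simp add: cardNet)
    finally show ?thesis using Fr_b by simp
  qed
  have V0: "0 < V" using sz T0 finT by (simp add: V_def card_gt_0_iff)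
  have Gd: "V / 10 * nz u \<le> Q u \<omega> \<and> Q u \<omega> \<le> 6 * V * nz u" if \<omega>: "\<omega> \<in> space P - Bad" for \<omega> u
    unfolding Q_def nz_def
  proof (rule net_bound[where M="\<lambda>t i. \<omega> (pos t i)", OF finT N0 V0])
    fix k assume kN: "k \<in> PiE {..<N} (\<lambda>_. {-(16 * int N)..16 * int N})"
      and nzp: "0 < (\<Sum>i<N. (real_of_int (k i) / (16 * real N))\<^sup>2)"
    have "\<omega> \<notin> lo k" "\<omega> \<notin> hi k" using \<omega> kN by (auto simp: Bad_eq Net_def)
    then show "V / 4 * (\<Sum>i<N. (real_of_int (k i) / (16 * real N))\<^sup>2)
         \<le> (\<Sum>t\<in>T. (\<Sum>i<N. real_of_int (k i) / (16 * real N) * \<omega> (pos t i))\<^sup>2) \<and>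
       (\<Sum>t\<in>T. (\<Sum>i<N. real_of_int (k i) / (16 * real N) * \<omega> (pos t i))\<^sup>2)
         \<le> 4 * V * (\<Sum>i<N. (real_of_int (k i) / (16 * real N))\<^sup>2)"
      using \<omega> nzp by (auto simp: lo_def hi_def Q_def nz_def zz_def)
  next
    have "\<omega> \<notin> Fr" using \<omega> by (auto simp: Bad_eq)
    then show "(\<Sum>t\<in>T. \<Sum>i<N. (\<omega> (pos t i))\<^sup>2) \<le> 4 * V * real N" using \<omega> by (auto simp: Fr_def)
  qed
  show ?thesis
  proof (intro exI conjI allI impI)
    show "Bad \<in> sets P" by (rule Bad_m)
    show "measure P Bad \<le> real ((32 * N + 1) ^ N) * (2 * exp (- real (card T) / 4)) + exp (- real (N * card T) / 2)"
      by (rule Mb)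
    fix \<omega> u assume "\<omega> \<in> space P - Bad"
    from Gd[OF this, of u] show "sz\<^sup>2 * real (card T) / 10 * (\<Sum>i<N. (u i)\<^sup>2) \<le> (\<Sum>t\<in>T. (\<Sum>i<N. u i * \<omega> (pos t i))\<^sup>2)"
        "(\<Sum>t\<in>T. (\<Sum>i<N. u i * \<omega> (pos t i))\<^sup>2) \<le> 6 * (sz\<^sup>2 * real (card T)) * (\<Sum>i<N. (u i)\<^sup>2)"
      by (simp_all add: V_def Q_def nz_def)
  qed
qed

end

lemma asym_real:
  fixes p q r :: real
  assumes "1 < p" "0 \<le> r" "r < 1" "0 < q"
  shows "eventually (\<lambda>x::real. 4 \<le> x \<and> x powr (-q) \<le> 1/2 \<and> 1 \<le> x powr p - 1 - x powr r \<and>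
     x * ln (32 * x + 1) - (x powr p - 1 - x powr r) / 4 \<le> - sqrt x \<and>
     x powr ((1 + r) / 2) * ln (33 * x) - x / 4 \<le> - sqrt x) at_top"
proof -
  have 1: "eventually (\<lambda>x::real. 4 \<le> x) at_top" by real_asymp
  have 2: "eventually (\<lambda>x::real. x powr (-q) \<le> 1/2) at_top" using assms by real_asymp
  have 3: "eventually (\<lambda>x::real. 1 \<le> x powr p - 1 - x powr r) at_top" using assms by real_asymp
  have 4: "eventually (\<lambda>x::real. x * ln (32 * x + 1) - (x powr p - 1 - x powr r) / 4 \<le> - sqrt x) at_top"
    using assms by real_asymp
  define rho where "rho = (1 + r) / 2"
  have rho: "0 < rho" "rho < 1" using assms by (auto simp: rho_def)
  have 5: "eventually (\<lambda>x::real. x powr rho * ln (33 * x) - x / 4 \<le> - sqrt x) at_top"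
    using rho by real_asymp
  show ?thesis using 1 2 3 4 5 unfolding rho_def by eventually_elim auto
qed

lemma asym_nat:
  fixes p q r :: real
  assumes "1 < p" "0 \<le> r" "r < 1" "0 < q"
  shows "eventually (\<lambda>n::nat. 4 \<le> real n \<and> real n powr (-q) \<le> 1/2 \<and> 1 \<le> real n powr p - 1 - real n powr r \<and>
     real n * ln (32 * real n + 1) - (real n powr p - 1 - real n powr r) / 4 \<le> - sqrt (real n) \<and>
     real n powr ((1 + r) / 2) * ln (33 * real n) - real n / 4 \<le> - sqrt (real n)) sequentially"
  by (rule eventually_compose_filterlim[OF asym_real[OF assms] filterlim_real_sequentially])

lemma final_pos:
  fixes sig m w :: real
  assumes s: "0 < sig" "sig < 1" and m: "1 \<le> m" and mw: "m * w = 1"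
    and A: "m * (1 - sig) \<le> 60 * sig" and B: "sig \<le> 240 * m * (1 - sig)"
  shows "1 / (1 + 60 * w) \<le> sig \<and> sig \<le> 1 / (1 + 1/240 * w) \<and> 1/241 * w \<le> 1 - sig \<and> 1 - sig \<le> 60 * w"
proof -
  have wm: "w = 1 / m" using mw m by (simp add: field_simps)
  have w0: "0 < w" using m by (simp add: wm)
  have 1: "1 - sig \<le> 60 * sig * w"
  proof -
    have "w * (m * (1 - sig)) \<le> w * (60 * sig)" using A w0 by (intro mult_left_mono) auto
    moreover have "w * (m * (1 - sig)) = (m * w) * (1 - sig)" by (simp only: mult_ac)
    moreover have "w * (60 * sig) = 60 * sig * w" by (simp only: mult_ac)
    ultimately show ?thesis using mw by simp
  qed
  have 2: "sig * w \<le> 240 * (1 - sig)"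
  proof -
    have "w * sig \<le> w * (240 * m * (1 - sig))" using B w0 by (intro mult_left_mono) auto
    moreover have "w * (240 * m * (1 - sig)) = 240 * (m * w) * (1 - sig)" by (simp only: mult_ac)
    ultimately show ?thesis using mw by (simp add: mult.commute)
  qed
  have g1: "1 / (1 + 60 * w) \<le> sig" using 1 w0 by (simp add: field_simps)
  have g2: "sig \<le> 1 / (1 + 1/240 * w)" using 2 w0 by (simp add: field_simps)
  have g3: "1/241 * w \<le> 1 - sig"
  proof -
    have "1 \<le> (240 * m + 1) * (1 - sig)" using B by (simp add: algebra_simps)
    also have "\<dots> \<le> 241 * m * (1 - sig)" using m s by (intro mult_right_mono) auto
    finally have "1 \<le> 241 * m * (1 - sig)" .
    then have "w * 1 \<le> w * (241 * m * (1 - sig))" using w0 by (intro mult_left_mono) auto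
    moreover have "w * (241 * m * (1 - sig)) = 241 * (m * w) * (1 - sig)" by (simp only: mult_ac)
    ultimately show ?thesis using mw by simp
  qed
  have "60 * w * sig \<le> 60 * w * 1" using s w0 by (intro mult_left_mono) auto
  then have g4: "1 - sig \<le> 60 * w" using 1 by (simp add: mult_ac)
  show ?thesis using g1 g2 g3 g4 by simp
qed

lemma final_neg:
  fixes sig m :: real
  assumes s: "0 < sig" "sig < 1" and m: "0 < m" "m \<le> 1"
    and A: "m * (1 - sig) \<le> 60 * sig" and B: "sig \<le> 240 * m * (1 - sig)"
  shows "1/61 * m \<le> sig \<and> sig \<le> 240 * m \<and> 1 / (1 + 240 * m) \<le> 1 - sig \<and> 1 - sig \<le> 1 / (1 + 1/60 * m)"
proof -
  have g1: "1/61 * m \<le> sig"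
  proof -
    have "m \<le> (60 + m) * sig" using A by (simp add: algebra_simps)
    also have "\<dots> \<le> 61 * sig" using m s by (intro mult_right_mono) auto
    finally show ?thesis by simp
  qed
  have g2: "sig \<le> 240 * m"
  proof -
    have "240 * m * (1 - sig) \<le> 240 * m * 1" using m s by (intro mult_left_mono) auto
    then show ?thesis using B by simp
  qed
  have g3: "1 / (1 + 240 * m) \<le> 1 - sig" using B m by (simp add: field_simps)
  have g4: "1 - sig \<le> 1 / (1 + 1/60 * m)" using A m s by (simp add: field_simps)
  show ?thesis using g1 g2 g3 g4 by simp
qed

lemma kappa_step:
  fixes a d s x sig m :: real
  assumes a: "0 < a" "a < 1" and d: "0 < d" and s: "0 < s" and x: "0 < x"
    and s01: "0 < sig" "sig < 1"
    and i: "a * d / s * x / 10 * (1 - sig) \<le> 6 * ((1 - a) * d) * sig"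
    and ii: "(1 - a) * d / 10 * sig \<le> 6 * (a * d / s * x) * (1 - sig)"
    and k1: "m \<le> a * x / (s * (1 - a))" and k2: "a * x / (s * (1 - a)) \<le> 4 * m"
  shows "m * (1 - sig) \<le> 60 * sig \<and> sig \<le> 240 * m * (1 - sig)"
proof -
  define k where "k = a * x / (s * (1 - a))"
  have k0: "0 < k" using a s x by (simp add: k_def)
  have c0: "0 < (1 - a) * d" using a d by simp
  have i': "k * (1 - sig) \<le> 60 * sig"
  proof -
    have "a * d / s * x / 10 * (1 - sig) = ((1 - a) * d / 10) * (k * (1 - sig))"
      using a s by (simp add: k_def field_simps)
    moreover have "6 * ((1 - a) * d) * sig = ((1 - a) * d / 10) * (60 * sig)" by simp
    ultimately have "((1 - a) * d / 10) * (k * (1 - sig)) \<le> ((1 - a) * d / 10) * (60 * sig)" using i by linarith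
    moreover have "0 < (1 - a) * d / 10" using c0 by simp
    ultimately show ?thesis by (simp only: mult_le_cancel_left_pos)
  qed
  have ii': "sig \<le> 60 * k * (1 - sig)"
  proof -
    have "6 * (a * d / s * x) * (1 - sig) = ((1 - a) * d / 10) * (60 * k * (1 - sig))"
      using a s by (simp add: k_def field_simps)
    moreover have "(1 - a) * d / 10 * sig = ((1 - a) * d / 10) * sig" by simp
    ultimately have "((1 - a) * d / 10) * sig \<le> ((1 - a) * d / 10) * (60 * k * (1 - sig))" using ii by linarith
    moreover have "0 < (1 - a) * d / 10" using c0 by simp
    ultimately show ?thesis by (simp only: mult_le_cancel_left_pos)
  qed
  have "m * (1 - sig) \<le> k * (1 - sig)" using k1 s01 by (intro mult_right_mono) (auto simp: k_def)
  moreover have "60 * k * (1 - sig) \<le> 60 * (4 * m) * (1 - sig)"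
    using k2 s01 by (intro mult_right_mono) (auto simp: k_def)
  ultimately show ?thesis using i' ii' by simp
qed

lemma SU1_sup:
  fixes omega :: "nat \<times> nat \<Rightarrow> real"
  assumes d: "0 < bl_d n p" and lam: "0 < bl_lambda n p q r 0"
  shows "SU1 n p q r omega = (SUP y\<in>PiE {..<n} (\<lambda>_. \<rat>). 2 * (\<Sum>i<n. y i * omega (i, 0))
            - (\<Sum>l<bl_d n p. (\<Sum>i<n. y i * omega (i, l))\<^sup>2))"
proof -
  obtain u where u: "\<forall>i<n. (\<Sum>j<bl_d n p. omega (i, j) * (\<Sum>m<n. u m * omega (m, j))) = omega (i, 0)"
    using SU1_exists_u[OF d] by blast
  have "SU1 n p q r omega = (\<Sum>m<n. u m * omega (m, 0))" by (rule SU1_repr[OF d lam u])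
  also have "\<dots> = (SUP y\<in>PiE {..<n} (\<lambda>_. \<rat>). 2 * (\<Sum>i<n. y i * omega (i, 0))
            - (\<Sum>l<bl_d n p. (\<Sum>i<n. y i * omega (i, l))\<^sup>2))"
    by (rule sup_repr[where Phi="\<lambda>i j. omega (i, j)" and x="\<lambda>i. omega (i, 0)", symmetric]) (use u in simp)
  finally show ?thesis .
qed

lemma SU1_bdd:
  fixes omega :: "nat \<times> nat \<Rightarrow> real"
  assumes d: "0 < bl_d n p"
  shows "bdd_above ((\<lambda>y. 2 * (\<Sum>i<n. y i * omega (i, 0)) - (\<Sum>l<bl_d n p. (\<Sum>i<n. y i * omega (i, l))\<^sup>2)) ` Y)"
proof -
  obtain u where u: "\<forall>i<n. (\<Sum>j<bl_d n p. omega (i, j) * (\<Sum>m<n. u m * omega (m, j))) = omega (i, 0)"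
    using SU1_exists_u[OF d] by blast
  have "2 * (\<Sum>i<n. y i * omega (i, 0)) - (\<Sum>l<bl_d n p. (\<Sum>i<n. y i * omega (i, l))\<^sup>2) \<le> (\<Sum>m<n. u m * omega (m, 0))" for y
    using quad_identity[where Phi="\<lambda>i j. omega (i, j)" and x="\<lambda>i. omega (i, 0)" and u=u and y=y] u
    by (simp add: sum_nonneg)
  then show ?thesis by (intro bdd_aboveI[where M="\<Sum>m<n. u m * omega (m, 0)"]) auto
qed

lemma (in gprod) SU1_meas:
  assumes K: "K = {..<n} \<times> {..<bl_d n p}" and d: "0 < bl_d n p" and lam: "0 < bl_lambda n p q r 0"
  shows "SU1 n p q r \<in> borel_measurable P"
proof -
  let ?Q = "PiE {..<n} (\<lambda>_. \<rat>) :: (nat \<Rightarrow> real) set"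
  let ?G = "\<lambda>y \<omega>. 2 * (\<Sum>i<n. y i * \<omega> (i, 0)) - (\<Sum>l<bl_d n p. (\<Sum>i<n. y i * \<omega> (i, l))\<^sup>2)"
  have eq: "SU1 n p q r = (\<lambda>\<omega>. SUP y\<in>?Q. ?G y \<omega>)" by (rule ext) (rule SU1_sup[OF d lam])
  have cQ: "countable ?Q" by (rule countable_PiE) (auto simp: countable_rat)
  have cm: "(\<lambda>\<omega>. \<omega> (i, l)) \<in> borel_measurable P" if "i < n" "l < bl_d n p" for i l
    using that by (intro coord_meas) (simp add: K)
  have Gm: "?G y \<in> borel_measurable P" for y
    using cm d by (intro borel_measurable_diff borel_measurable_times borel_measurable_const
        borel_measurable_sum borel_measurable_power) auto
  have "(\<lambda>\<omega>. SUP y\<in>?Q. ?G y \<omega>) \<in> borel_measurable P"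
    by (rule borel_measurable_cSUP[OF cQ Gm SU1_bdd[OF d]])
  then show ?thesis by (simp add: eq)
qed

definition cond12 :: "real \<Rightarrow> real \<Rightarrow> real \<Rightarrow> real \<Rightarrow> real \<Rightarrow> real \<Rightarrow> real \<Rightarrow> real \<Rightarrow> nat \<Rightarrow> real \<Rightarrow> real \<Rightarrow> real \<Rightarrow> bool" where
  "cond12 L1 U1 L2 U2 Lb1 Ub1 Lb2 Ub2 n q r x =
    (if q < 1 - r then
       1 / (1 + L1 * real n powr (q - (1 - r))) \<le> x \<and>
       x \<le> 1 / (1 + U1 * real n powr (q - (1 - r))) \<and>
       Lb1 * real n powr (q - (1 - r)) \<le> 1 - x \<and>
       1 - x \<le> Ub1 * real n powr (q - (1 - r))
     else
       L2 * real n powr ((1 - r) - q) \<le> x \<and>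
       x \<le> U2 * real n powr ((1 - r) - q) \<and>
       1 / (1 + Lb2 * real n powr ((1 - r) - q)) \<le> 1 - x \<and>
       1 - x \<le> 1 / (1 + Ub2 * real n powr ((1 - r) - q)))"

lemma exp_split4: "exp (a::real) * (2 * exp (- b / 4)) = 2 * exp (a - b / 4)"
proof -
  have "exp (a - b / 4) = exp (a + (- b / 4))" by simp
  also have "\<dots> = exp a * exp (- b / 4)" by (rule exp_add)
  finally show ?thesis by simp
qed

lemma main_n:
  fixes p q r :: real and n :: nat
  assumes p: "1 < p" and r: "0 \<le> r" "r < 1" and q: "0 < q" and qr: "q \<noteq> 1 - r"
    and H: "4 \<le> real n \<and> real n powr (-q) \<le> 1/2 \<and> 1 \<le> real n powr p - 1 - real n powr r \<and>
     real n * ln (32 * real n + 1) - (real n powr p - 1 - real n powr r) / 4 \<le> - sqrt (real n) \<and>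
     real n powr ((1 + r) / 2) * ln (33 * real n) - real n / 4 \<le> - sqrt (real n)"
  shows "1 - 8 * exp (- sqrt (real n)) \<le> measure (bl_train_measure n p q r)
     {omega \<in> space (bl_train_measure n p q r).
        cond12 60 (1/240) (1/61) 240 (1/241) 60 240 (1/60) n q r (SU1 n p q r omega)}"
proof -
  define x where "x = real n"
  define d where "d = bl_d n p"
  define s where "s = bl_s n r"
  define a where "a = bl_a n q"
  have x4: "4 \<le> x" and xq: "x powr (-q) \<le> 1/2" and xpr: "1 \<le> x powr p - 1 - x powr r"
    and h4: "x * ln (32 * x + 1) - (x powr p - 1 - x powr r) / 4 \<le> - sqrt x"
    and h5: "x powr ((1 + r) / 2) * ln (33 * x) - x / 4 \<le> - sqrt x"
    using H by (simp_all add: x_def)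
  have x0: "0 < x" using x4 by simp
  have n0: "0 < n" using x4 by (simp add: x_def)
  have a_eq: "a = x powr (-q)" by (simp add: a_def bl_a_def x_def)
  have a0: "0 < a" using x0 by (simp add: a_eq)
  have a_half: "a \<le> 1/2" using xq by (simp add: a_eq)
  have xr1: "1 \<le> x powr r" using x4 r by (intro ge_one_powr_ge_zero) auto
  have d_fl: "real d = of_int \<lfloor>x powr p\<rfloor>" by (simp add: d_def bl_d_def x_def)
  have s_fl: "real s = of_int \<lfloor>x powr r\<rfloor>" using xr1 by (simp add: s_def bl_s_def x_def)
  have d_lo: "x powr p - 1 < real d" and d_hi: "real d \<le> x powr p"
    unfolding d_fl by linarith+
  have s_lo: "x powr r - 1 < real s" and s_hi: "real s \<le> x powr r"
    unfolding s_fl by linarith+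
  have s1: "1 \<le> s" using s_lo xr1 by linarith
  have s_half: "x powr r \<le> 2 * real s"
  proof (cases "x powr r < 2")
    case True then show ?thesis using s1 by linarith
  next
    case False then show ?thesis using s_lo by linarith
  qed
  have dms: "x powr p - 1 - x powr r < real d - real s" using d_lo s_hi by linarith
  have sd: "s < d" using dms xpr by linarith
  have d0: "0 < d" using sd by simp
  define lam1 where "lam1 = a * real d / real s"
  define lamb where "lamb = (1 - a) * real d / (real d - real s)"
  have lamj: "bl_lambda n p q r j = (if j < s then lam1 else lamb)" for j
    by (simp add: bl_lambda_def Let_def lam1_def lamb_def a_def d_def s_def)
  have dsr: "0 < real d - real s" using sd by simp
  have lam1_0: "0 < lam1" using a0 s1 d0 by (simp add: lam1_def)
  have lamb_0: "0 < lamb" using a_half d0 dsr by (simp add: lamb_def)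
  define K where "K = {..<n} \<times> {..<d}"
  define sdv where "sdv = (\<lambda>(i::nat, j). sqrt (bl_lambda n p q r j))"
  have sdv: "sdv (i, j) = sqrt (if j < s then lam1 else lamb)" for i j by (simp add: sdv_def lamj)
  interpret G: gprod K sdv
  proof
    show "finite K" by (simp add: K_def)
    fix k assume "k \<in> K"
    then obtain i j where "k = (i, j)" by (cases k)
    then show "0 < sdv k" using lam1_0 lamb_0 by (simp add: sdv)
  qed
  have PP: "bl_train_measure n p q r = G.P"
    unfolding bl_train_measure_def G.P_def G.Mk_def K_def[symmetric] d_def[symmetric]
    by (rule PiM_cong) (auto simp: sdv_def)
  have K0: "K \<noteq> {}" using n0 d0 by (auto simp: K_def)
  define VB where "VB = lamb * (real d - real s)"
  have VB_eq: "(sqrt lamb)\<^sup>2 * real (card {s..<d}) = VB"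
    using lamb_0 sd by (simp add: VB_def of_nat_diff)
  have NB: "\<exists>BadB. BadB \<in> sets G.P \<and>
      measure G.P BadB \<le> real ((32 * n + 1) ^ n) * (2 * exp (- real (card {s..<d}) / 4)) + exp (- real (n * card {s..<d}) / 2) \<and>
      (\<forall>\<omega> u. \<omega> \<in> space G.P - BadB \<longrightarrow>
         (sqrt lamb)\<^sup>2 * real (card {s..<d}) / 10 * (\<Sum>i<n. (u i)\<^sup>2) \<le> (\<Sum>t\<in>{s..<d}. (\<Sum>i<n. u i * \<omega> (i, t))\<^sup>2) \<and>
         (\<Sum>t\<in>{s..<d}. (\<Sum>i<n. u i * \<omega> (i, t))\<^sup>2) \<le> 6 * ((sqrt lamb)\<^sup>2 * real (card {s..<d})) * (\<Sum>i<n. (u i)\<^sup>2))"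
  proof -
    note N = G.net_event[where T="{s..<d}" and N=n and pos="\<lambda>t i. (i, t)" and ci=fst and sz="sqrt lamb",
        OF K0 _ _ n0]
    have A: "{s..<d} \<noteq> {}" using sd by simp
    have B: "0 < sqrt lamb" using lamb_0 by simp
    have C: "\<And>t i. t \<in> {s..<d} \<Longrightarrow> i < n \<Longrightarrow> (i, t) \<in> K" by (auto simp: K_def)
    have D: "\<And>t i. t \<in> {s..<d} \<Longrightarrow> i < n \<Longrightarrow> sdv (i, t) = sqrt lamb" by (auto simp: sdv)
    have E: "\<And>t i t' i'. t \<in> {s..<d} \<Longrightarrow> i < n \<Longrightarrow> t' \<in> {s..<d} \<Longrightarrow> i' < n \<Longrightarrow> (i, t) = (i', t') \<Longrightarrow> t = t' \<and> i = i'"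
      by auto
    have F: "\<And>t i. t \<in> {s..<d} \<Longrightarrow> i < n \<Longrightarrow> fst (i, t) = i" by simp
    show ?thesis using N[OF _ A B C E F D] by simp
  qed
  then obtain BadB where BB1: "BadB \<in> sets G.P"
    and BB2: "measure G.P BadB \<le> real ((32 * n + 1) ^ n) * (2 * exp (- real (card {s..<d}) / 4)) + exp (- real (n * card {s..<d}) / 2)"
    and BB3: "\<And>\<omega> u. \<omega> \<in> space G.P - BadB \<Longrightarrow>
         VB / 10 * (\<Sum>i<n. (u i)\<^sup>2) \<le> (\<Sum>t\<in>{s..<d}. (\<Sum>i<n. u i * \<omega> (i, t))\<^sup>2) \<and>
         (\<Sum>t\<in>{s..<d}. (\<Sum>i<n. u i * \<omega> (i, t))\<^sup>2) \<le> 6 * VB * (\<Sum>i<n. (u i)\<^sup>2)"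
    unfolding VB_eq by blast
  define VS where "VS = lam1 * x"
  have VS_eq: "(sqrt lam1)\<^sup>2 * real (card {..<n}) = VS"
    using lam1_0 by (simp add: VS_def x_def)
  have NS: "\<exists>BadS. BadS \<in> sets G.P \<and>
      measure G.P BadS \<le> real ((32 * s + 1) ^ s) * (2 * exp (- real (card {..<n}) / 4)) + exp (- real (s * card {..<n}) / 2) \<and>
      (\<forall>\<omega> u. \<omega> \<in> space G.P - BadS \<longrightarrow>
         (sqrt lam1)\<^sup>2 * real (card {..<n}) / 10 * (\<Sum>i<s. (u i)\<^sup>2) \<le> (\<Sum>t\<in>{..<n}. (\<Sum>i<s. u i * \<omega> (t, i))\<^sup>2) \<and>
         (\<Sum>t\<in>{..<n}. (\<Sum>i<s. u i * \<omega> (t, i))\<^sup>2) \<le> 6 * ((sqrt lam1)\<^sup>2 * real (card {..<n})) * (\<Sum>i<s. (u i)\<^sup>2))"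
  proof -
    have s0: "0 < s" using s1 by simp
    note N = G.net_event[where T="{..<n}" and N=s and pos="\<lambda>t i. (t, i)" and ci=snd and sz="sqrt lam1",
        OF K0 _ _ s0]
    have A: "{..<n} \<noteq> {}" using n0 by auto
    have B: "0 < sqrt lam1" using lam1_0 by simp
    have C: "\<And>t i. t \<in> {..<n} \<Longrightarrow> i < s \<Longrightarrow> (t, i) \<in> K" using sd by (auto simp: K_def)
    have D: "\<And>t i. t \<in> {..<n} \<Longrightarrow> i < s \<Longrightarrow> sdv (t, i) = sqrt lam1" by (auto simp: sdv)
    have E: "\<And>t i t' i'. t \<in> {..<n} \<Longrightarrow> i < s \<Longrightarrow> t' \<in> {..<n} \<Longrightarrow> i' < s \<Longrightarrow> (t, i) = (t', i') \<Longrightarrow> t = t' \<and> i = i'"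
      by auto
    have F: "\<And>t i. t \<in> {..<n} \<Longrightarrow> i < s \<Longrightarrow> snd (t, i) = i" by simp
    show ?thesis using N[OF _ A B C E F D] by simp
  qed
  then obtain BadS where BS1: "BadS \<in> sets G.P"
    and BS2: "measure G.P BadS \<le> real ((32 * s + 1) ^ s) * (2 * exp (- real (card {..<n}) / 4)) + exp (- real (s * card {..<n}) / 2)"
    and BS3: "\<And>\<omega> u. \<omega> \<in> space G.P - BadS \<Longrightarrow>
         VS / 10 * (\<Sum>i<s. (u i)\<^sup>2) \<le> (\<Sum>t\<in>{..<n}. (\<Sum>i<s. u i * \<omega> (t, i))\<^sup>2) \<and>
         (\<Sum>t\<in>{..<n}. (\<Sum>i<s. u i * \<omega> (t, i))\<^sup>2) \<le> 6 * VS * (\<Sum>i<s. (u i)\<^sup>2)"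
    unfolding VS_eq by blast
  have sqx: "sqrt x \<le> x / 2"
  proof -
    have "2 \<le> sqrt x" using x4 real_sqrt_le_mono[of 4 x] by simp
    then have "2 * sqrt x \<le> sqrt x * sqrt x" using x0 by (intro mult_right_mono) auto
    then show ?thesis using x0 by (simp add: less_imp_le)
  qed
  have pow_exp: "real ((32 * k + 1) ^ k) = exp (real k * ln (32 * real k + 1))" for k :: nat
  proof -
    have "real ((32 * k + 1) ^ k) = (32 * real k + 1) ^ k" by (simp add: add.commute)
    moreover have "exp (real k * ln (32 * real k + 1)) = exp (ln (32 * real k + 1)) ^ k" by (rule exp_of_nat_mult)
    moreover have "exp (ln (32 * real k + 1)) = 32 * real k + 1" by simp
    ultimately show ?thesis by simp
  qed
  have cardB: "real (card {s..<d}) = real d - real s" using sd by (simp add: of_nat_diff)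
  have mBB: "measure G.P BadB \<le> 3 * exp (- sqrt x)"
  proof -
    have t1: "real ((32 * n + 1) ^ n) * (2 * exp (- real (card {s..<d}) / 4)) \<le> 2 * exp (- sqrt x)"
    proof -
      have "real ((32 * n + 1) ^ n) * (2 * exp (- real (card {s..<d}) / 4))
          = 2 * exp (x * ln (32 * x + 1) - (real d - real s) / 4)"
        unfolding pow_exp cardB x_def[symmetric] by (rule exp_split4)
      also have "\<dots> \<le> 2 * exp (- sqrt x)"
      proof -
        have "(x powr p - 1 - x powr r) / 4 \<le> (real d - real s) / 4" using dms by (simp add: divide_right_mono)
        then have "x * ln (32 * x + 1) - (real d - real s) / 4 \<le> - sqrt x" using h4 by linarith
        then show ?thesis by simp
      qed
      finally show ?thesis .
    qed
    have t2: "exp (- real (n * card {s..<d}) / 2) \<le> exp (- sqrt x)"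
    proof -
      have "1 \<le> card {s..<d}" using sd by simp
      then have "n * 1 \<le> n * card {s..<d}" by (intro mult_le_mono2)
      then have "real n \<le> real (n * card {s..<d})" by (subst of_nat_le_iff) simp
      then show ?thesis using sqx by (simp add: x_def)
    qed
    show ?thesis using BB2 t1 t2 by linarith
  qed
  have mBS: "measure G.P BadS \<le> 3 * exp (- sqrt x)"
  proof -
    define rho where "rho = (1 + r) / 2"
    have x1: "1 \<le> x" using x4 by simp
    have sxr: "real s \<le> x powr rho" using s_hi powr_mono[of r rho x] x1 r by (simp add: rho_def)
    have xr_x: "x powr r \<le> x" using powr_mono[of r 1 x] x1 r by simp
    have ln_le: "ln (32 * real s + 1) \<le> ln (33 * x)"
      using s_hi xr_x x1 by (intro ln_mono) auto
    have t1: "real ((32 * s + 1) ^ s) * (2 * exp (- real (card {..<n}) / 4)) \<le> 2 * exp (- sqrt x)"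
    proof -
      have "real s * ln (32 * real s + 1) \<le> x powr rho * ln (33 * x)"
        using sxr ln_le by (intro mult_mono) auto
      then have "real s * ln (32 * real s + 1) - x / 4 \<le> - sqrt x" using h5 by (simp add: rho_def)
      moreover have "real ((32 * s + 1) ^ s) * (2 * exp (- real (card {..<n}) / 4))
          = 2 * exp (real s * ln (32 * real s + 1) - x / 4)"
        unfolding pow_exp x_def card_lessThan by (rule exp_split4)
      ultimately show ?thesis by simp
    qed
    have t2: "exp (- real (s * card {..<n}) / 2) \<le> exp (- sqrt x)"
    proof -
      have "1 * n \<le> s * n" using s1 by (intro mult_le_mono1)
      then have "real n \<le> real (s * card {..<n})" by (subst of_nat_le_iff) simp
      then show ?thesis using sqx by (simp add: x_def)
    qed
    show ?thesis using BS2 t1 t2 by linarith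
  qed
  have Bad_m: "BadB \<union> BadS \<in> sets G.P" using BB1 BS1 by simp
  have mBad: "measure G.P (BadB \<union> BadS) \<le> 6 * exp (- sqrt x)"
    using measure_Un_le[OF BB1 BS1] mBB mBS by simp
  have dd: "bl_d n p = d" by (simp add: d_def)
  have lam0: "0 < bl_lambda n p q r 0" using lamj[of 0] s1 lam1_0 by simp
  have SUm: "SU1 n p q r \<in> borel_measurable G.P"
    by (rule G.SU1_meas[OF _ _ lam0]) (use d0 in \<open>simp_all add: K_def dd\<close>)
  define Sset where "Sset = {\<omega> \<in> space G.P. cond12 60 (1/240) (1/61) 240 (1/241) 60 240 (1/60) n q r (SU1 n p q r \<omega>)}"
  have Sset_m: "Sset \<in> sets G.P"
  proof -
    note SUm[measurable]
    show ?thesis unfolding Sset_def cond12_def by measurable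
  qed
  have VB_eq2: "VB = (1 - a) * real d" using dsr by (simp add: VB_def lamb_def)
  have VS_eq2: "VS = a * real d / real s * x" by (simp add: VS_def lam1_def)
  define m where "m = x powr (1 - r - q)"
  have m0: "0 < m" using x0 by (simp add: m_def)
  have ax: "a * x = x powr (1 - q)" using x0 by (simp add: a_eq powr_diff powr_minus field_simps)
  have m_eq: "m = a * x / x powr r" using x0 by (simp add: m_def ax powr_diff[symmetric] algebra_simps)
  have s0r: "0 < real s" using s1 by simp
  have xr0: "0 < x powr r" using x0 by simp
  have k1: "m \<le> a * x / (real s * (1 - a))"
  proof -
    have "a * x / x powr r \<le> a * x / real s"
      using s_hi s0r a0 x0 by (intro divide_left_mono) auto
    also have "\<dots> \<le> a * x / (real s * (1 - a))"
      using s0r a0 a_half x0 by (intro divide_left_mono) (auto intro: mult_left_le)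
    finally show ?thesis by (simp add: m_eq)
  qed
  have k2: "a * x / (real s * (1 - a)) \<le> 4 * m"
  proof -
    have "x powr r / 4 \<le> real s * (1 - a)"
    proof -
      have "x powr r / 4 = (x powr r / 2) * (1/2)" by simp
      also have "\<dots> \<le> real s * (1 - a)" using s_half a_half s0r by (intro mult_mono) auto
      finally show ?thesis .
    qed
    then have "a * x / (real s * (1 - a)) \<le> a * x / (x powr r / 4)"
      using xr0 a0 x0 a_half s0r by (intro divide_left_mono) auto
    also have "\<dots> = 4 * m" by (simp add: m_eq)
    finally show ?thesis .
  qed
  have good: "\<omega> \<in> Sset" if \<omega>: "\<omega> \<in> space G.P - (BadB \<union> BadS)" for \<omega>
  proof -
    have wB: "\<omega> \<in> space G.P - BadB" and wS: "\<omega> \<in> space G.P - BadS" using \<omega> by auto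
    obtain u where u: "\<forall>i<n. (\<Sum>j<d. \<omega> (i, j) * (\<Sum>m<n. u m * \<omega> (m, j))) = \<omega> (i, 0)"
      using SU1_exists_u[of n p \<omega>] d0 by (auto simp: dd)
    have ESx: "(\<Sum>i<n. (\<omega> (i, 0))\<^sup>2) \<le> 6 * VS"
    proof -
      define e0 where "e0 = (\<lambda>i::nat. if i = 0 then (1::real) else 0)"
      have "(\<Sum>t\<in>{..<n}. (\<Sum>i<s. e0 i * \<omega> (t, i))\<^sup>2) \<le> 6 * VS * (\<Sum>i<s. (e0 i)\<^sup>2)"
        using BS3[OF wS, of e0] by simp
      moreover have "(\<Sum>i<s. e0 i * \<omega> (t, i)) = \<omega> (t, 0)" for t
      proof -
        have "(\<Sum>i<s. e0 i * \<omega> (t, i)) = (\<Sum>i<s. if i = 0 then \<omega> (t, 0) else 0)"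
          by (rule sum.cong) (auto simp: e0_def)
        then show ?thesis using s1 by simp
      qed
      moreover have "(\<Sum>i<s. (e0 i)\<^sup>2) = 1"
      proof -
        have "(\<Sum>i<s. (e0 i)\<^sup>2) = (\<Sum>i<s. if i = 0 then 1 else 0)"
          by (rule sum.cong) (auto simp: e0_def)
        then show ?thesis using s1 by simp
      qed
      ultimately show ?thesis by simp
    qed
    have VB0: "0 < VB" using lamb_0 dsr by (simp add: VB_def)
    have VS0: "0 < VS" using lam1_0 x0 by (simp add: VS_def)
    define sig where "sig = (\<Sum>m<n. u m * \<omega> (m, 0))"
    have D: "0 < sig \<and> sig < 1 \<and> VS / 10 * (1 - sig) \<le> 6 * VB * sig \<and> VB / 10 * sig \<le> 6 * VS * (1 - sig)"
      unfolding sig_def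
    proof (rule det_bounds[where omega=\<omega> and n=n and d=d and s=s and cB="VB / 10" and cS="VS / 10"
          and CB="6 * VB" and CX="6 * VS" and u=u])
      show "0 < s" using s1 by simp
      show "s \<le> d" using sd by simp
      show "0 < VB / 10" "0 < VS / 10" using VB0 VS0 by simp_all
      fix v :: "nat \<Rightarrow> real"
      show "VB / 10 * (\<Sum>i<n. (v i)\<^sup>2) \<le> (\<Sum>j\<in>{s..<d}. (\<Sum>i<n. v i * \<omega> (i, j))\<^sup>2)"
        using BB3[OF wB, of v] by simp
      show "(\<Sum>j\<in>{s..<d}. (\<Sum>i<n. v i * \<omega> (i, j))\<^sup>2) \<le> 6 * VB * (\<Sum>i<n. (v i)\<^sup>2)"
        using BB3[OF wB, of v] by simp
    next
      fix w :: "nat \<Rightarrow> real"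
      show "VS / 10 * (\<Sum>j<s. (w j)\<^sup>2) \<le> (\<Sum>i<n. (\<Sum>j<s. w j * \<omega> (i, j))\<^sup>2)"
        using BS3[OF wS, of w] by simp
    qed (use ESx u in simp_all)
    have SUeq: "SU1 n p q r \<omega> = sig"
      unfolding sig_def by (rule SU1_repr) (use d0 lam0 u in \<open>simp_all add: dd\<close>)
    have KS: "m * (1 - sig) \<le> 60 * sig \<and> sig \<le> 240 * m * (1 - sig)"
    proof (rule kappa_step[OF a0 _ _ s0r x0 _ _ _ _ k1 k2])
      show "a < 1" using a_half by simp
      show "0 < real d" using d0 by simp
      show "0 < sig" "sig < 1" using D by simp_all
      show "a * real d / real s * x / 10 * (1 - sig) \<le> 6 * ((1 - a) * real d) * sig"
        using D unfolding VS_eq2 VB_eq2 by simp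
      show "(1 - a) * real d / 10 * sig \<le> 6 * (a * real d / real s * x) * (1 - sig)"
        using D unfolding VS_eq2 VB_eq2 by simp
    qed
    have x1: "1 \<le> x" using x4 by simp
    have "cond12 60 (1/240) (1/61) 240 (1/241) 60 240 (1/60) n q r sig"
    proof (cases "q < 1 - r")
      case True
      define w where "w = x powr (q - (1 - r))"
      have m1: "1 \<le> m" unfolding m_def using x1 True by (intro ge_one_powr_ge_zero) auto
      have mw: "m * w = 1" using x0 by (simp add: m_def w_def powr_add[symmetric])
      have "1 / (1 + 60 * w) \<le> sig \<and> sig \<le> 1 / (1 + 1/240 * w) \<and> 1/241 * w \<le> 1 - sig \<and> 1 - sig \<le> 60 * w"
        using final_pos[OF _ _ m1 mw] D KS by simp
      then show ?thesis using True by (simp add: cond12_def w_def x_def)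
    next
      case False
      then have qg: "1 - r - q < 0" using qr by simp
      have m1: "m \<le> 1"
      proof -
        have "m \<le> x powr 0" unfolding m_def using x1 qg by (intro powr_mono) auto
        then show ?thesis using x0 by simp
      qed
      have "1/61 * m \<le> sig \<and> sig \<le> 240 * m \<and> 1 / (1 + 240 * m) \<le> 1 - sig \<and> 1 - sig \<le> 1 / (1 + 1/60 * m)"
        using final_neg[OF _ _ m0 m1] D KS by simp
      then show ?thesis using False by (simp add: cond12_def m_def x_def)
    qed
    then show ?thesis using \<omega> SUeq by (simp add: Sset_def)
  qed
  have sub: "space G.P - Sset \<subseteq> BadB \<union> BadS" using good by blast
  have "measure G.P (space G.P - Sset) \<le> measure G.P (BadB \<union> BadS)"
    by (rule G.finite_measure_mono[OF sub Bad_m])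
  moreover have "measure G.P (space G.P - Sset) = 1 - measure G.P Sset" by (rule G.prob_compl[OF Sset_m])
  moreover have "6 * exp (- sqrt x) \<le> 8 * exp (- sqrt x)" by simp
  ultimately have "1 - 8 * exp (- sqrt x) \<le> measure G.P Sset" using mBad by linarith
  then show ?thesis unfolding PP Sset_def x_def .
qed

theorem lemma12:
  fixes p r q :: real
  assumes "p > 1" "0 \<le> r" "r < 1" "0 < q" "q < p - r" "q \<noteq> 1 - r"
  shows "\<exists>L1 U1 L2 U2 Lb1 Ub1 Lb2 Ub2 :: real.
           L1 > 0 \<and> U1 > 0 \<and> L2 > 0 \<and> U2 > 0 \<and> Lb1 > 0 \<and> Ub1 > 0 \<and> Lb2 > 0 \<and> Ub2 > 0 \<and>
           (\<exists>N. \<forall>n\<ge>N.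
              measure (bl_train_measure n p q r)
                {omega \<in> space (bl_train_measure n p q r).
                   (if q < 1 - r then
                      1 / (1 + L1 * real n powr (q - (1 - r))) \<le> SU1 n p q r omega \<and>
                      SU1 n p q r omega \<le> 1 / (1 + U1 * real n powr (q - (1 - r))) \<and>
                      Lb1 * real n powr (q - (1 - r)) \<le> 1 - SU1 n p q r omega \<and>
                      1 - SU1 n p q r omega \<le> Ub1 * real n powr (q - (1 - r))
                    else
                      L2 * real n powr ((1 - r) - q) \<le> SU1 n p q r omega \<and>
                      SU1 n p q r omega \<le> U2 * real n powr ((1 - r) - q) \<and>
                      1 / (1 + Lb2 * real n powr ((1 - r) - q)) \<le> 1 - SU1 n p q r omega \<and>
                      1 - SU1 n p q r omega \<le> 1 / (1 + Ub2 * real n powr ((1 - r) - q)))}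
              \<ge> 1 - 8 * exp (- sqrt (real n)))"
proof -
  have pp: "1 < p" "0 \<le> r" "r < 1" "0 < q" using assms by simp_all
  obtain N where HN: "\<And>n. N \<le> n \<Longrightarrow> 4 \<le> real n \<and> real n powr (-q) \<le> 1/2 \<and> 1 \<le> real n powr p - 1 - real n powr r \<and>
     real n * ln (32 * real n + 1) - (real n powr p - 1 - real n powr r) / 4 \<le> - sqrt (real n) \<and>
     real n powr ((1 + r) / 2) * ln (33 * real n) - real n / 4 \<le> - sqrt (real n)"
    using asym_nat[OF pp] unfolding eventually_sequentially by blast
  have main': "\<exists>N. \<forall>n\<ge>N. measure (bl_train_measure n p q r)
     {omega \<in> space (bl_train_measure n p q r).
        cond12 60 (1/240) (1/61) 240 (1/241) 60 240 (1/60) n q r (SU1 n p q r omega)}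
     \<ge> 1 - 8 * exp (- sqrt (real n))"
    using main_n[OF pp assms(6) HN] by blast
  show ?thesis
    apply (rule exI[of _ 60], rule exI[of _ "1/240"], rule exI[of _ "1/61"], rule exI[of _ 240],
        rule exI[of _ "1/241"], rule exI[of _ 60], rule exI[of _ 240], rule exI[of _ "1/60"])
    apply (intro conjI)
    apply (simp_all only: zero_less_numeral zero_less_divide_iff zero_less_one conj_absorb simp_thms)
    using main'[unfolded cond12_def] .
qed

end
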